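(* Let $p\ge2$, $f\in\mathcal H_0$, $u$ the solution of $\partial_tu+\partial J(u)\ni0$, $u(0)=f$, $\lambda:=\lambda_1\|f\|^{p-2}$, $a(t)=(1+(p-2)\lambda t)^{-\frac1{p-2}}$ if $p>2$ and $a(t)=e^{-\lambda t}$ if $p=2$, and $w(t):=u(t)/a(t)$. Let $w_*$ be an asymptotic profile, i.e. $w_*\in\mathcal H$ with $w(t_k)\to w_*$ strongly for some sequence $t_k\to\infty$. If $p=2$, then $w_*$ is a non-trivial ground state or $w_*=0$. If $p>2$, then $\|w_*\|\le\|f\|$, with equality if and only if $w_*$ is a ground state.
   Context: $\mathcal H$ is a real Hilbert space with inner product $\langle\cdot,\cdot\rangle$ and norm $\|\cdot\|$. $J:\mathcal H\to\mathbb R\cup\{\infty\}$ is convex, lower semicontinuous, proper, with dense effective domain, and absolutely $p$-homogeneous: $J(cu)=|c|^pJ(u)$ for $c\ne0$, $J(0)=0$. $\partial J(u)=\{\zeta: J(u)+\langle\zeta,v-u\rangle\le J(v)\ \forall v\}$; $\mathcal N(J)=\{u:J(u)=0\}$; $\mathcal H_0:=\mathcal N(J)^\perp\setminus\{0\}$. Rayleigh quotient $R(u):=pJ(u)/\|u\|^p$; standing coercivity assumption $\lambda_1:=\inf_{u\in\mathcal H_0}R(u)>0$; a ground state is a minimizer of $R$ over $\mathcal H_0$. The gradient flow solution (Brezis) is the unique continuous $u:[0,\infty)\to\mathcal H$, Lipschitz on $[\delta,\infty)$ for all $\delta>0$, right-differentiable on $(0,\infty)$ with $u(0)=f$ and $\partial_t^+u(t)=-\zeta(t)$,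 $\zeta(t)$ the minimal-norm element of $\partial J(u(t))$. The function $a$ solves $a'=-\lambda a^{p-1}$, $a(0)=1$. *)

theory Defs
  imports "HOL-Analysis.Analysis" "HOL-Library.Extended_Real"
begin

text \<open>Functionals J : H -> R \<union> {\<infinity>} are modelled as ereal-valued functions that never take -\<infinity>.\<close>

definition proper_fun :: "('a \<Rightarrow> ereal) \<Rightarrow> bool" where
  "proper_fun J \<longleftrightarrow> (\<forall>u. J u \<noteq> -\<infinity>) \<and> (\<exists>u. J u \<noteq> \<infinity>)"

definition convex_fun :: "('a::real_vector \<Rightarrow> ereal) \<Rightarrow> bool" where
  "convex_fun J \<longleftrightarrow> (\<forall>x y. \<forall>t::real. 0 < t \<and> t < 1 \<longrightarrow>
      J ((1 - t) *\<^sub>R x + t *\<^sub>R y) \<le> ereal (1 - t) * J x + ereal t * J y)"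

definition lsc_fun :: "('a::topological_space \<Rightarrow> ereal) \<Rightarrow> bool" where
  "lsc_fun J \<longleftrightarrow> (\<forall>c. closed {u. J u \<le> c})"

definition eff_dom :: "('a \<Rightarrow> ereal) \<Rightarrow> 'a set" where
  "eff_dom J = {u. J u \<noteq> \<infinity>}"

definition abs_homogeneous :: "real \<Rightarrow> ('a::real_vector \<Rightarrow> ereal) \<Rightarrow> bool" where
  "abs_homogeneous p J \<longleftrightarrow> J 0 = 0 \<and>
      (\<forall>c u. c \<noteq> 0 \<longrightarrow> J (c *\<^sub>R u) = ereal (\<bar>c\<bar> powr p) * J u)"

definition subdiff :: "('a::real_inner \<Rightarrow> ereal) \<Rightarrow> 'a \<Rightarrow> 'a set" where
  "subdiff J u = {\<zeta>. \<forall>v. J u + ereal (inner \<zeta> (v - u)) \<le> J v}"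

definition null_set :: "('a \<Rightarrow> ereal) \<Rightarrow> 'a set" where
  "null_set J = {u. J u = 0}"

definition H0 :: "('a::real_inner \<Rightarrow> ereal) \<Rightarrow> 'a set" where
  "H0 J = {x. \<forall>y\<in>null_set J. inner x y = 0} - {0}"

definition rayleigh :: "real \<Rightarrow> ('a::real_normed_vector \<Rightarrow> ereal) \<Rightarrow> 'a \<Rightarrow> ereal" where
  "rayleigh p J u = ereal p * J u / ereal (norm u powr p)"

definition lambda1 :: "real \<Rightarrow> ('a::real_inner \<Rightarrow> ereal) \<Rightarrow> ereal" where
  "lambda1 p J = (INF u\<in>H0 J. rayleigh p J u)"

definition ground_state :: "real \<Rightarrow> ('a::real_inner \<Rightarrow> ereal) \<Rightarrow> 'a \<Rightarrow> bool" where
  "ground_state p J w \<longleftrightarrow> w \<in> H0 J \<and> rayleigh p J w = lambda1 p J"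

definition min_norm_subgrad :: "('a::real_inner \<Rightarrow> ereal) \<Rightarrow> 'a \<Rightarrow> 'a \<Rightarrow> bool" where
  "min_norm_subgrad J x z \<longleftrightarrow> z \<in> subdiff J x \<and> (\<forall>\<eta>\<in>subdiff J x. norm z \<le> norm \<eta>)"

text \<open>Brezis gradient flow solution of u' + dJ(u) \<ni> 0, u(0) = f.\<close>
definition gradient_flow :: "('a::real_inner \<Rightarrow> ereal) \<Rightarrow> 'a \<Rightarrow> (real \<Rightarrow> 'a) \<Rightarrow> bool" where
  "gradient_flow J f u \<longleftrightarrow>
     continuous_on {0..} u \<and> u 0 = f \<and>
     (\<forall>\<delta>>0. \<exists>L. L-lipschitz_on {\<delta>..} u) \<and>
     (\<forall>t>0. \<exists>z. min_norm_subgrad J (u t) z \<and> (u has_vector_derivative (- z)) (at_right t))"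

definition profile_a :: "real \<Rightarrow> real \<Rightarrow> real \<Rightarrow> real" where
  "profile_a p lam t = (if p = 2 then exp (- lam * t)
                        else (1 + (p - 2) * lam * t) powr (- 1 / (p - 2)))"

end

theory Submission
  imports Defs
begin


lemma rd_mono_aux:
  fixes f f' :: "real \<Rightarrow> real"
  assumes "c \<le> b" "continuous_on {c..b} f"
    "\<And>t. c \<le> t \<Longrightarrow> t < b \<Longrightarrow> (f has_real_derivative f' t) (at_right t)"
    "\<And>t. c \<le> t \<Longrightarrow> t < b \<Longrightarrow> f' t \<ge> 0"
  shows "f c \<le> f b"
proof -
  have key: "f c - f b \<le> e * (b - c)" if e: "e > 0" for e
  proof -
    define g where "g t = f t + e * t" for t
    define M where "M = {c..b} \<inter> g -` {g c..}"
    have contg: "continuous_on {c..b} g" unfolding g_def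
      by (intro continuous_intros assms(2))
    have "closed M" unfolding M_def
      by (intro continuous_closed_preimage contg) auto
    have "c \<in> M" using assms(1) by (auto simp: M_def)
    have "bdd_above M" by (auto simp: M_def)
    define s where "s = Sup M"
    have "s \<in> M" unfolding s_def using \<open>closed M\<close> \<open>c \<in> M\<close> \<open>bdd_above M\<close>
      by (intro closed_contains_Sup) auto
    have "s = b"
    proof (rule ccontr)
      assume "s \<noteq> b"
      with \<open>s \<in> M\<close> have sb: "c \<le> s" "s < b" by (auto simp: M_def)
      have "(g has_real_derivative f' s + e) (at_right s)"
        unfolding g_def by (auto intro!: derivative_eq_intros assms(3) sb)
      then have "((\<lambda>y. (g y - g s) / (y - s)) \<longlongrightarrow> f' s + e) (at_right s)"
        by (simp add: has_field_derivative_iff)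
      moreover have "f' s + e > 0" using assms(4)[OF sb] e by simp
      ultimately have ev1: "eventually (\<lambda>y. (g y - g s) / (y - s) > 0) (at_right s)"
        by (rule order_tendstoD)
      have ev2: "eventually (\<lambda>y. s < y \<and> y < b) (at_right s)"
        using sb(2) by (auto simp: eventually_at_right_field intro!: exI[of _ b])
      obtain y where y: "(g y - g s) / (y - s) > 0" "s < y" "y < b"
        using eventually_happens'[OF _ eventually_conj[OF ev1 ev2]] by auto
      then have "g y > g s" by (simp add: zero_less_divide_iff)
      with \<open>s \<in> M\<close> y sb have "y \<in> M" by (auto simp: M_def)
      then have "y \<le> s" unfolding s_def using \<open>bdd_above M\<close> by (rule cSup_upper)
      with y show False by simp
    qed
    with \<open>s \<in> M\<close> show ?thesis by (auto simp: M_def g_def algebra_simps)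
  qed
  show ?thesis
  proof (cases "c = b")
    case False
    with assms(1) have bc: "b - c > 0" by simp
    show ?thesis
    proof (rule field_le_epsilon)
      fix e :: real assume "e > 0"
      from key[of "e / (b - c)"] bc \<open>e > 0\<close> show "f c \<le> f b + e" by simp
    qed
  qed simp
qed

lemma rd_mono:
  fixes f f' :: "real \<Rightarrow> real"
  assumes "a \<le> b" "continuous_on {a..b} f"
    "\<And>t. a < t \<Longrightarrow> t < b \<Longrightarrow> (f has_real_derivative f' t) (at_right t)"
    "\<And>t. a < t \<Longrightarrow> t < b \<Longrightarrow> f' t \<ge> 0"
  shows "f a \<le> f b"
proof (cases "a = b")
  case False
  with assms(1) have ab: "a < b" by simp
  have c: "f c \<le> f b" if "a < c" "c \<le> b" for c
    by (rule rd_mono_aux[of c b f f']) (use that assms in \<open>auto intro: continuous_on_subset\<close>)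
  have "(f \<longlongrightarrow> f a) (at a within {a..b})"
    using assms(2) ab by (auto simp: continuous_on_def)
  then have lim: "(f \<longlongrightarrow> f a) (at_right a)" using ab by (simp add: at_within_Icc_at_right)
  have ev: "eventually (\<lambda>c. f c \<le> f b) (at_right a)"
    using ab by (auto simp: eventually_at_right_field intro!: exI[of _ b] c)
  show ?thesis by (rule tendsto_le[OF _ tendsto_const lim ev]) simp
qed simp

lemma rd_antimono:
  fixes f f' :: "real \<Rightarrow> real"
  assumes "a \<le> b" "continuous_on {a..b} f"
    "\<And>t. a < t \<Longrightarrow> t < b \<Longrightarrow> (f has_real_derivative f' t) (at_right t)"
    "\<And>t. a < t \<Longrightarrow> t < b \<Longrightarrow> f' t \<le> 0"
  shows "f b \<le> f a"
proof -
  have "- f a \<le> - f b"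
    by (rule rd_mono[of a b "\<lambda>t. - f t" "\<lambda>t. - f' t"])
      (use assms in \<open>auto intro!: continuous_intros derivative_eq_intros\<close>)
  then show ?thesis by simp
qed

locale Jctx =
  fixes J :: "'a::{real_inner,complete_space} \<Rightarrow> ereal" and p :: real
  assumes p2: "p \<ge> 2" and proper: "proper_fun J" and conv: "convex_fun J"
    and lsc: "lsc_fun J" and hom: "abs_homogeneous p J"
begin

definition Jr where "Jr x = real_of_ereal (J x)"

lemma J_not_minf: "J x \<noteq> -\<infinity>"
  using proper by (auto simp: proper_fun_def)

lemma J0: "J 0 = 0" using hom by (simp add: abs_homogeneous_def)

lemma J_scale: "c \<noteq> 0 \<Longrightarrow> J (c *\<^sub>R x) = ereal (\<bar>c\<bar> powr p) * J x"
  using hom by (simp add: abs_homogeneous_def)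

lemma J_uminus: "J (- x) = J x"
  using J_scale[of "-1" x] by simp

lemma conv_half: "J ((1/2) *\<^sub>R x + (1/2) *\<^sub>R y) \<le> ereal (1/2) * J x + ereal (1/2) * J y"
  using conv[unfolded convex_fun_def, rule_format, of "1/2" x y] by simp

lemma J_nonneg: "J x \<ge> 0"
proof -
  have "J ((1/2) *\<^sub>R x + (1/2) *\<^sub>R (- x)) \<le> ereal (1/2) * J x + ereal (1/2) * J (- x)"
    by (rule conv_half)
  then have "0 \<le> ereal (1/2) * J x + ereal (1/2) * J x"
    by (simp add: J_uminus J0 scaleR_right_diff_distrib)
  then show ?thesis using J_not_minf[of x]
    by (cases "J x") auto
qed

lemma J_fin: "J x \<noteq> \<infinity> \<Longrightarrow> J x = ereal (Jr x)"
  using J_not_minf[of x] by (cases "J x") (auto simp: Jr_def)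

lemma Jr_nonneg: "Jr x \<ge> 0"
  using J_nonneg[of x] by (cases "J x") (auto simp: Jr_def)

lemma Jr0: "Jr 0 = 0" by (simp add: Jr_def J0)

lemma Jr_scale: "Jr (c *\<^sub>R x) = \<bar>c\<bar> powr p * Jr x"
proof (cases "c = 0")
  case True then show ?thesis by (simp add: Jr0)
next
  case False
  then show ?thesis using J_scale[OF False, of x] J_not_minf[of x]
    by (cases "J x") (auto simp: Jr_def)
qed

lemma J_scale_fin: "J x \<noteq> \<infinity> \<Longrightarrow> J (c *\<^sub>R x) \<noteq> \<infinity>"
  using J_scale[of c x] J_fin[of x] by (cases "c = 0") (auto simp: J0)

lemma subdiff_fin: assumes "z \<in> subdiff J x" shows "J x \<noteq> \<infinity>"
proof
  assume inf: "J x = \<infinity>"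
  obtain v where v: "J v \<noteq> \<infinity>" using proper by (auto simp: proper_fun_def)
  from assms have "J x + ereal (inner z (v - x)) \<le> J v" by (auto simp: subdiff_def)
  with inf v show False by simp
qed

lemma subdiff_ineq:
  assumes "z \<in> subdiff J x" "J v \<noteq> \<infinity>"
  shows "Jr x + inner z (v - x) \<le> Jr v"
proof -
  from assms have "J x + ereal (inner z (v - x)) \<le> J v" by (auto simp: subdiff_def)
  then show ?thesis using J_fin[OF subdiff_fin[OF assms(1)]] J_fin[OF assms(2)] by simp
qed

lemma subdiff_intro:
  assumes "J x \<noteq> \<infinity>" "\<And>v. J v \<noteq> \<infinity> \<Longrightarrow> Jr x + inner z (v - x) \<le> Jr v"
  shows "z \<in> subdiff J x"
  unfolding subdiff_def
proof (intro CollectI allI)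
  fix v
  show "J x + ereal (inner z (v - x)) \<le> J v"
  proof (cases "J v = \<infinity>")
    case False
    then show ?thesis using assms(2)[OF False] J_fin[OF assms(1)] J_fin[OF False] by simp
  qed simp
qed

lemma subdiff_mono:
  assumes "z1 \<in> subdiff J x1" "z2 \<in> subdiff J x2"
  shows "inner (z1 - z2) (x1 - x2) \<ge> 0"
proof -
  have "Jr x1 + inner z1 (x2 - x1) \<le> Jr x2" by (rule subdiff_ineq[OF assms(1) subdiff_fin[OF assms(2)]])
  moreover have "Jr x2 + inner z2 (x1 - x2) \<le> Jr x1" by (rule subdiff_ineq[OF assms(2) subdiff_fin[OF assms(1)]])
  ultimately show ?thesis by (simp add: inner_diff_left inner_diff_right)
qed

lemma subdiff_mid:
  assumes "z1 \<in> subdiff J x" "z2 \<in> subdiff J x"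
  shows "(1/2) *\<^sub>R (z1 + z2) \<in> subdiff J x"
proof (rule subdiff_intro[OF subdiff_fin[OF assms(1)]])
  fix v assume v: "J v \<noteq> \<infinity>"
  have "Jr x + inner z1 (v - x) \<le> Jr v" "Jr x + inner z2 (v - x) \<le> Jr v"
    using subdiff_ineq[OF assms(1) v] subdiff_ineq[OF assms(2) v] by auto
  then show "Jr x + inner ((1/2) *\<^sub>R (z1 + z2)) (v - x) \<le> Jr v"
    by (simp add: inner_add_left field_simps)
qed

lemma zero_subdiff: "0 \<in> subdiff J 0"
  by (rule subdiff_intro) (auto simp: J0 Jr0 Jr_nonneg)

lemma euler:
  assumes z: "z \<in> subdiff J x"
  shows "inner z x = p * Jr x"
proof -
  define r where "r = Jr x"
  define phi where "phi c = c powr p * r - r - (c - 1) * inner z x" for c :: real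
  have fin: "J x \<noteq> \<infinity>" by (rule subdiff_fin[OF z])
  have "phi 1 \<le> phi c" if "\<bar>1 - c\<bar> < 1" for c
  proof -
    from that have c: "c > 0" by simp
    have "Jr x + inner z (c *\<^sub>R x - x) \<le> Jr (c *\<^sub>R x)"
      by (rule subdiff_ineq[OF z J_scale_fin[OF fin]])
    then show ?thesis using c by (simp add: phi_def r_def Jr_scale inner_diff_right algebra_simps)
  qed
  then have mn: "\<forall>c. \<bar>1 - c\<bar> < 1 \<longrightarrow> phi 1 \<le> phi c" by blast
  have dd: "(phi has_real_derivative (p * 1 powr (p - 1) * r - inner z x)) (at 1)"
    unfolding phi_def by (auto intro!: derivative_eq_intros)
  have "p * 1 powr (p - 1) * r - inner z x = 0"
    using DERIV_local_min[OF dd _ mn] by simp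
  then show ?thesis by (simp add: r_def)
qed

lemma subdiff_null:
  assumes z: "z \<in> subdiff J x" and n: "J n = 0"
  shows "inner z n = 0"
proof (rule ccontr)
  assume ne: "inner z n \<noteq> 0"
  have fin: "J x \<noteq> \<infinity>" by (rule subdiff_fin[OF z])
  have bound: "Jr x + s * inner z n \<le> 2 powr (p - 1) * Jr x" for s
  proof -
    have Jsn: "J ((2 * s) *\<^sub>R n) = 0"
      using J_scale[of "2 * s" n] n by (cases "s = 0") (auto simp: J0)
    have "J ((1/2) *\<^sub>R (2 *\<^sub>R x) + (1/2) *\<^sub>R ((2 * s) *\<^sub>R n)) \<le>
          ereal (1/2) * J (2 *\<^sub>R x) + ereal (1/2) * J ((2 * s) *\<^sub>R n)"
      by (rule conv_half)
    also have "\<dots> = ereal (1/2 * 2 powr p * Jr x)"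
      using J_scale[of 2 x] J_fin[OF fin] Jsn by simp
    finally have le: "J (x + s *\<^sub>R n) \<le> ereal (1/2 * 2 powr p * Jr x)" by simp
    then have fin2: "J (x + s *\<^sub>R n) \<noteq> \<infinity>" by auto
    have "Jr x + inner z ((x + s *\<^sub>R n) - x) \<le> Jr (x + s *\<^sub>R n)"
      by (rule subdiff_ineq[OF z fin2])
    also have "\<dots> \<le> 1/2 * 2 powr p * Jr x" using le J_fin[OF fin2] by simp
    also have "1/2 * 2 powr p = (2::real) powr (p - 1)" by (simp add: powr_diff)
    finally show ?thesis by simp
  qed
  from bound[of "(2 powr (p - 1) * Jr x - Jr x + 1) / inner z n"] ne show False by simp
qed

end


lemma vd_inner:
  fixes x y :: "real \<Rightarrow> 'a::real_inner"
  assumes "(x has_vector_derivative x') (at t within S)" "(y has_vector_derivative y') (at t within S)"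
  shows "((\<lambda>s. inner (x s) (y s)) has_real_derivative (inner (x t) y' + inner x' (y t))) (at t within S)"
  unfolding has_field_derivative_def
  using has_derivative_inner[OF assms[unfolded has_vector_derivative_def]]
  by (rule has_derivative_eq_rhs) (auto simp: algebra_simps fun_eq_iff)

lemma vd_inner_const:
  fixes x :: "real \<Rightarrow> 'a::real_inner"
  assumes "(x has_vector_derivative x') (at t within S)"
  shows "((\<lambda>s. inner (x s) c) has_real_derivative (inner x' c)) (at t within S)"
  using vd_inner[OF assms, of "\<lambda>_. c" 0] by simp

lemma vd_dq:
  fixes x :: "real \<Rightarrow> 'a::real_normed_vector"
  assumes "(x has_vector_derivative v) (at t within S)"
  shows "((\<lambda>s. (1 / (s - t)) *\<^sub>R (x s - x t)) \<longlongrightarrow> v) (at t within S)"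
proof -
  have "((\<lambda>y. (1 / norm (y - t)) *\<^sub>R (x y - (x t + (y - t) *\<^sub>R v))) \<longlongrightarrow> 0) (at t within S)"
    using assms unfolding has_vector_derivative_def has_derivative_within by auto
  then have "((\<lambda>y. norm ((1 / norm (y - t)) *\<^sub>R (x y - (x t + (y - t) *\<^sub>R v)))) \<longlongrightarrow> 0) (at t within S)"
    by (rule tendsto_norm_zero)
  then have "((\<lambda>s. norm ((1 / (s - t)) *\<^sub>R (x s - x t) - v)) \<longlongrightarrow> 0) (at t within S)"
  proof (rule Lim_transform_eventually)
    show "eventually (\<lambda>y. norm ((1 / norm (y - t)) *\<^sub>R (x y - (x t + (y - t) *\<^sub>R v))) =
        norm ((1 / (y - t)) *\<^sub>R (x y - x t) - v)) (at t within S)"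
      unfolding eventually_at_filter
    proof (intro always_eventually allI impI)
      fix y assume "y \<noteq> t"
      then have e1: "(1 / (y - t)) *\<^sub>R ((y - t) *\<^sub>R v) = v" by simp
      have "(1 / (y - t)) *\<^sub>R (x y - (x t + (y - t) *\<^sub>R v)) = 
         (1 / (y - t)) *\<^sub>R ((x y - x t) - (y - t) *\<^sub>R v)" by (simp add: diff_diff_eq)
      also have "\<dots> = (1 / (y - t)) *\<^sub>R (x y - x t) - v"
        by (simp only: scaleR_diff_right e1)
      finally have "(1 / (y - t)) *\<^sub>R (x y - x t) - v = (1 / (y - t)) *\<^sub>R (x y - (x t + (y - t) *\<^sub>R v))" 
        by simp
      then show "norm ((1 / norm (y - t)) *\<^sub>R (x y - (x t + (y - t) *\<^sub>R v))) =
        norm ((1 / (y - t)) *\<^sub>R (x y - x t) - v)" by simp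
    qed
  qed
  then show ?thesis
    by (simp only: tendsto_norm_zero_iff LIM_zero_iff)
qed

lemma vd_dq_h:
  fixes x :: "real \<Rightarrow> 'a::real_normed_vector"
  assumes "(x has_vector_derivative v) (at_right t)"
  shows "((\<lambda>h. (1 / h) *\<^sub>R (x (t + h) - x t)) \<longlongrightarrow> v) (at_right 0)"
proof -
  have "((\<lambda>s. (1 / (s - t)) *\<^sub>R (x s - x t)) \<longlongrightarrow> v) (filtermap (\<lambda>h. h + t) (at_right 0))"
    using vd_dq[OF assms] by (simp add: at_right_to_0[symmetric])
  then show ?thesis unfolding filterlim_filtermap by (simp add: add.commute)
qed

lemma vd_shift:
  fixes x :: "real \<Rightarrow> 'a::real_normed_vector"
  assumes "(x has_vector_derivative v) (at_right (t + h))"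
  shows "((\<lambda>s. x (s + h)) has_vector_derivative v) (at_right t)"
proof -
  have d: "((\<lambda>s. s + h) has_vector_derivative 1) (at t within {t<..})"
    by (auto intro!: derivative_eq_intros simp: has_real_derivative_iff_has_vector_derivative[symmetric])
  have im: "(\<lambda>s. s + h) ` {t<..} = {t + h<..}"
    apply (auto simp: image_iff)
    subgoal for x by (rule bexI[of _ "x - h"]) auto
    done
  have "((x \<circ> (\<lambda>s. s + h)) has_vector_derivative (1 *\<^sub>R v)) (at t within {t<..})"
    by (rule vector_diff_chain_within[OF d]) (use assms im in simp)
  then show ?thesis by (simp add: o_def)
qed

lemma contraction:
  fixes x y :: "real \<Rightarrow> 'a::real_inner"
  assumes "t0 \<le> t1" "continuous_on {t0..t1} x" "continuous_on {t0..t1} y"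
   "\<And>t. t0 < t \<Longrightarrow> t < t1 \<Longrightarrow> (x has_vector_derivative - \<xi> t) (at_right t)"
   "\<And>t. t0 < t \<Longrightarrow> t < t1 \<Longrightarrow> (y has_vector_derivative - \<eta> t) (at_right t)"
   "\<And>t. t0 < t \<Longrightarrow> t < t1 \<Longrightarrow> inner (\<xi> t - \<eta> t) (x t - y t) \<ge> 0"
  shows "norm (x t1 - y t1) \<le> norm (x t0 - y t0)"
proof -
  define g where "g s = inner (x s - y s) (x s - y s)" for s
  have "g t1 \<le> g t0"
  proof (rule rd_antimono[of t0 t1 g "\<lambda>t. - 2 * inner (\<xi> t - \<eta> t) (x t - y t)"])
    show "continuous_on {t0..t1} g" unfolding g_def
      by (intro continuous_intros assms)
  next
    fix t assume t: "t0 < t" "t < t1"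
    have dd: "((\<lambda>s. x s - y s) has_vector_derivative (- \<xi> t - - \<eta> t)) (at_right t)"
      by (intro has_vector_derivative_diff assms t)
    show "(g has_real_derivative - 2 * inner (\<xi> t - \<eta> t) (x t - y t)) (at_right t)"
      unfolding g_def using vd_inner[OF dd dd] 
      by (simp add: algebra_simps inner_commute)
    show "- 2 * inner (\<xi> t - \<eta> t) (x t - y t) \<le> 0" using assms(6)[OF t] by simp
  qed (use assms in auto)
  then show ?thesis by (simp add: g_def norm_le)
qed

lemma parallelogram:
  fixes a b :: "'a::real_inner"
  shows "(norm (a - b))^2 = 2 * (norm a)^2 + 2 * (norm b)^2 - (norm (a + b))^2"
  by (simp add: power2_norm_eq_inner inner_add inner_diff inner_commute)

lemma nested_mid:
  fixes S :: "nat \<Rightarrow> 'a::{real_inner,complete_space} set"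
  assumes cl: "\<And>n. closed (S n)" and ne: "\<And>n. S n \<noteq> {}" and dec: "\<And>n. S (Suc n) \<subseteq> S n"
    and mid: "\<And>n y1 y2. y1 \<in> S n \<Longrightarrow> y2 \<in> S n \<Longrightarrow> (1/2) *\<^sub>R (y1 + y2) \<in> S n"
    and bd: "\<And>n y. y \<in> S n \<Longrightarrow> norm y \<le> B"
  shows "\<exists>y. \<forall>n. y \<in> S n"
proof -
  have decle: "S k \<subseteq> S n" if "n \<le> k" for n k
    using that by (induction k rule: dec_induct) (use dec in auto)
  define m where "m n = Inf (norm ` S n)" for n
  have bb: "bdd_below (norm ` S n)" for n by (rule bdd_belowI[of _ 0]) auto
  have mle: "m n \<le> norm y" if "y \<in> S n" for n y
    unfolding m_def using that bb by (intro cInf_lower) auto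
  have m0: "0 \<le> m n" for n
    unfolding m_def using ne[of n] by (intro cInf_greatest) auto
  have mB: "m n \<le> B" for n
    using ne[of n] mle bd by (metis ex_in_conv order_trans)
  have mmono: "m n \<le> m k" if "n \<le> k" for n k
    unfolding m_def using ne[of k] bb[of n] decle[OF that] by (intro cInf_superset_mono) auto
  have ex: "\<exists>y. y \<in> S n \<and> norm y < m n + 1 / (real n + 1)" for n
  proof -
    have "Inf (norm ` S n) < m n + 1 / (real n + 1)" unfolding m_def by simp
    then obtain r where "r \<in> norm ` S n" "r < m n + 1 / (real n + 1)"
      using ne[of n] by (subst (asm) cInf_less_iff) (auto simp: bb)
    then show ?thesis by auto
  qed
  obtain y where y': "\<forall>n. y n \<in> S n \<and> norm (y n) < m n + 1 / (real n + 1)"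
    using choice[of "\<lambda>n y. y \<in> S n \<and> norm y < m n + 1 / (real n + 1)"] ex by blast
  then have y: "\<And>n. y n \<in> S n" "\<And>n. norm (y n) < m n + 1 / (real n + 1)" by auto
  have inc: "incseq m" using mmono by (simp add: incseq_def)
  have "convergent m"
    by (rule Bseq_monoseq_convergent[OF _ monoseq_iff[THEN iffD2]])
       (use inc mB m0 in \<open>auto intro!: BseqI'[of _ B]\<close>)
  then obtain M where mM: "m \<longlonglongrightarrow> M" by (auto simp: convergent_def)
  have mleM: "m n \<le> M" for n by (rule incseq_le[OF inc mM])
  have key: "(norm (y n - y k))^2 \<le> 4 * ((M + 1 / (real n + 1))^2 - (m n)^2)" if "n \<le> k" for n k
  proof -
    have yk: "y k \<in> S n" using decle[OF that] y(1) by auto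
    have "m n \<le> norm ((1/2) *\<^sub>R (y n + y k))" by (rule mle[OF mid[OF y(1) yk]])
    then have s1: "2 * m n \<le> norm (y n + y k)" by simp
    have "(2 * m n)^2 \<le> (norm (y n + y k))^2" using s1 m0[of n] by (intro power_mono) auto
    moreover have "norm (y n) \<le> M + 1 / (real n + 1)" using y(2)[of n] mleM[of n] by linarith
    moreover have "norm (y k) \<le> M + 1 / (real n + 1)"
    proof -
      have "1 / (real k + 1) \<le> 1 / (real n + 1)" using that by (intro divide_left_mono) auto
      then show ?thesis using y(2)[of k] mleM[of k] by linarith
    qed
    ultimately have "(norm (y n))^2 \<le> (M + 1 / (real n + 1))^2" "(norm (y k))^2 \<le> (M + 1 / (real n + 1))^2"
      "(2 * m n)^2 \<le> (norm (y n + y k))^2"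
      by (simp_all add: power_mono)
    moreover have "(2 * m n)^2 = 4 * (m n)^2" by (simp add: power_mult_distrib)
    ultimately show ?thesis unfolding parallelogram by (smt (verit))
  qed
  have lim0: "(\<lambda>n. 4 * ((M + 1 / (real n + 1))^2 - (m n)^2)) \<longlonglongrightarrow> 4 * ((M + 0)^2 - M^2)"
  proof -
    have "(\<lambda>n. 1 / (real n + 1)) \<longlonglongrightarrow> 0"
      using LIMSEQ_inverse_real_of_nat by (simp add: inverse_eq_divide add.commute)
    then show ?thesis
      by (rule tendsto_mult[OF tendsto_const tendsto_diff[OF tendsto_power[OF tendsto_add[OF tendsto_const]] tendsto_power[OF mM]]])
  qed
  have "Cauchy y"
  proof (rule metric_CauchyI)
    fix e :: real assume e: "e > 0"
    from lim0 have "eventually (\<lambda>n. 4 * ((M + 1 / (real n + 1))^2 - (m n)^2) < e^2) sequentially"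
      using e by (intro order_tendstoD) auto
    then obtain N where N: "\<And>n. n \<ge> N \<Longrightarrow> 4 * ((M + 1 / (real n + 1))^2 - (m n)^2) < e^2"
      by (auto simp: eventually_sequentially)
    have "dist (y n) (y k) < e" if "n \<ge> N" "k \<ge> N" for n k
    proof -
      have "(norm (y n - y k))^2 < e^2"
      proof (cases "n \<le> k")
        case True show ?thesis by (rule order_le_less_trans[OF key[OF True] N[OF that(1)]])
      next
        case False then have "k \<le> n" by simp
        have "(norm (y k - y n))^2 < e^2" by (rule order_le_less_trans[OF key[OF \<open>k \<le> n\<close>] N[OF that(2)]])
        then show ?thesis by (simp only: norm_minus_commute[of "y k"])
      qed
      then have "norm (y n - y k) < e" using e by (auto intro: power_less_imp_less_base[of _ 2])
      then show ?thesis by (simp add: dist_norm)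
    qed
    then show "\<exists>N. \<forall>n\<ge>N. \<forall>k\<ge>N. dist (y n) (y k) < e" by blast
  qed
  then have "convergent y" by (simp only: Cauchy_convergent_iff)
  then obtain L where L: "y \<longlonglongrightarrow> L" by (auto simp: convergent_def)
  have "L \<in> S n" for n
  proof -
    have B: "(\<lambda>k. y (k + n)) \<longlonglongrightarrow> L" using L by (rule LIMSEQ_ignore_initial_segment)
    have A: "y (k + n) \<in> S n" for k using decle[of n "k + n"] y(1)[of "k + n"] by auto
    show ?thesis by (rule closed_sequentially[OF cl[of n] A B])
  qed
  then show ?thesis by (intro exI[of _ L] allI)
qed


context Jctx begin

definition Rr where "Rr x = p * Jr x / norm x powr p"

lemma p_pos: "p > 0" using p2 by simp

lemma rayleigh_eq:
  assumes "J x \<noteq> \<infinity>" "x \<noteq> 0"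
  shows "rayleigh p J x = ereal (Rr x)"
  using assms J_fin[OF assms(1)] by (simp add: rayleigh_def Rr_def)

lemma lam_le: "x \<in> H0 J \<Longrightarrow> lambda1 p J \<le> rayleigh p J x"
  unfolding lambda1_def by (rule INF_lower)

lemma H0_iff: "x \<in> H0 J \<longleftrightarrow> (\<forall>n\<in>null_set J. inner x n = 0) \<and> x \<noteq> 0"
  by (auto simp: H0_def)

lemma lam_Rr:
  assumes "lambda1 p J = ereal l" "x \<in> H0 J" "J x \<noteq> \<infinity>"
  shows "l \<le> Rr x"
  using lam_le[OF assms(2)] rayleigh_eq[OF assms(3)] assms(1,2) by (auto simp: H0_iff)

lemma lam_lower:
  assumes l: "lambda1 p J = ereal l" and perp: "\<forall>n\<in>null_set J. inner x n = 0" and fin: "J x \<noteq> \<infinity>"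
  shows "l * norm x powr p / p \<le> Jr x"
proof (cases "x = 0")
  case True then show ?thesis by (simp add: Jr0)
next
  case False
  then have "l \<le> Rr x" using lam_Rr[OF l _ fin] perp by (auto simp: H0_iff)
  then have "l * norm x powr p \<le> p * Jr x" using False by (simp add: Rr_def pos_le_divide_eq)
  then show ?thesis using p_pos by (simp add: pos_divide_le_eq mult.commute)
qed

lemma young_p:
  fixes a b :: real
  assumes "a \<ge> 0" "b \<ge> 0"
  shows "a powr (p - 1) * b \<le> (p - 1) / p * a powr p + b powr p / p"
proof -
  have p1: "p / (p - 1) > 1" "p > 1" using p2 by (auto simp: field_simps)
  have "1 / (p / (p - 1)) + 1 / p = 1" using p2 by (simp add: field_simps)
  from Youngs_inequality[OF p1 this, of "a powr (p - 1)" b] assms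
  have "a powr (p - 1) * b \<le> (a powr (p - 1)) powr (p / (p - 1)) / (p / (p - 1)) + b powr p / p"
    by simp
  also have "(a powr (p - 1)) powr (p / (p - 1)) = a powr p"
    using p2 by (simp add: powr_powr)
  finally show ?thesis by (simp add: field_simps)
qed

lemma EL:
  assumes l: "lambda1 p J = ereal l" "l \<ge> 0" and perp: "\<forall>n\<in>null_set J. inner x n = 0"
    and fin: "J x \<noteq> \<infinity>" and v: "Jr v = l * norm v powr p / p"
  shows "Jr v + l * norm v powr (p - 2) * inner v (x - v) \<le> Jr x"
proof -
  have a: "norm v powr (p - 2) * inner v x \<le> norm v powr (p - 1) * norm x"
  proof (cases "v = 0")
    case False
    have "norm v powr (p - 2) * inner v x \<le> norm v powr (p - 2) * (norm v * norm x)"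
      by (intro mult_left_mono norm_cauchy_schwarz) auto
    also have "\<dots> = (norm v powr (p - 2) * norm v powr 1) * norm x" using False by simp
    also have "norm v powr (p - 2) * norm v powr 1 = norm v powr (p - 2 + 1)" by (rule powr_add[symmetric])
    also have "p - 2 + 1 = p - 1" by simp
    finally show ?thesis .
  qed simp
  have b: "norm v powr (p - 2) * inner v v = norm v powr p"
  proof (cases "v = 0")
    case False
    have "norm v powr (p - 2) * inner v v = norm v powr (p - 2) * norm v powr 2"
      using False by (simp add: power2_norm_eq_inner[symmetric])
    also have "\<dots> = norm v powr (p - 2 + 2)" by (rule powr_add[symmetric])
    also have "p - 2 + 2 = p" by simp
    finally show ?thesis .
  qed (use p2 in simp)
  have "Jr v + l * norm v powr (p - 2) * inner v (x - v) =
        l * norm v powr p / p + l * (norm v powr (p - 2) * inner v x) - l * norm v powr p"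
    using v b by (simp add: inner_diff_right algebra_simps)
  also have "\<dots> \<le> l * norm v powr p / p + l * ((p - 1) / p * norm v powr p + norm x powr p / p) - l * norm v powr p"
    using a young_p[of "norm v" "norm x"] l(2) by (auto intro!: mult_left_mono)
  also have "\<dots> = l * norm x powr p / p" using p_pos by (simp add: field_simps)
  also have "\<dots> \<le> Jr x" by (rule lam_lower[OF l(1) perp fin])
  finally show ?thesis .
qed

end

locale Fctx = Jctx J p for J :: "'a::{real_inner,complete_space} \<Rightarrow> ereal" and p :: real +
  fixes u \<zeta> :: "real \<Rightarrow> 'a" and f :: 'a
  assumes ucont: "continuous_on {0..} u" and u0: "u 0 = f"
    and fperp: "\<And>n. n \<in> null_set J \<Longrightarrow> inner f n = 0"
    and zmin: "\<And>t. 0 < t \<Longrightarrow> min_norm_subgrad J (u t) (\<zeta> t)"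
    and uder: "\<And>t. 0 < t \<Longrightarrow> (u has_vector_derivative - \<zeta> t) (at_right t)"
begin

lemma zsub: "0 < t \<Longrightarrow> \<zeta> t \<in> subdiff J (u t)"
  using zmin by (auto simp: min_norm_subgrad_def)

lemma zmin': "0 < t \<Longrightarrow> \<eta> \<in> subdiff J (u t) \<Longrightarrow> norm (\<zeta> t) \<le> norm \<eta>"
  using zmin by (auto simp: min_norm_subgrad_def)

lemma Jfin: "0 < t \<Longrightarrow> J (u t) \<noteq> \<infinity>"
  using subdiff_fin[OF zsub] .

lemma ucont_on: "0 \<le> a \<Longrightarrow> continuous_on {a..b} u"
  by (rule continuous_on_subset[OF ucont]) auto

lemma uperp: assumes "0 \<le> t" "n \<in> null_set J" shows "inner (u t) n = 0"
proof -
  have Jn: "J n = 0" using assms(2) by (simp add: null_set_def)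
  have d: "((\<lambda>s. inner (u s) n) has_real_derivative 0) (at_right s)" if "0 < s" for s
    using vd_inner_const[OF uder[OF that], of n] subdiff_null[OF zsub[OF that] Jn] by simp
  have c: "continuous_on {0..t} (\<lambda>s. inner (u s) n)"
    by (intro continuous_intros ucont_on) auto
  have "inner (u 0) n \<le> inner (u t) n"
    by (rule rd_mono[OF assms(1) c d]) auto
  moreover have "inner (u t) n \<le> inner (u 0) n"
    by (rule rd_antimono[OF assms(1) c d]) auto
  ultimately show ?thesis using fperp[OF assms(2)] u0 by simp
qed

lemma uperp': "0 \<le> t \<Longrightarrow> \<forall>n\<in>null_set J. inner (u t) n = 0"
  using uperp by blast

lemma unorm_mono: assumes "0 \<le> s" "s \<le> t" shows "norm (u t) \<le> norm (u s)"
proof -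
  have "norm (u t - (\<lambda>_. 0) t) \<le> norm (u s - (\<lambda>_. 0) s)"
  proof (rule contraction[where \<xi> = \<zeta> and \<eta> = "\<lambda>_. 0"])
    fix r assume r: "s < r" "r < t"
    show "(u has_vector_derivative - \<zeta> r) (at_right r)" using r assms by (intro uder) auto
    show "((\<lambda>_. 0) has_vector_derivative - 0) (at_right r)" by (auto intro: derivative_eq_intros)
    show "0 \<le> inner (\<zeta> r - 0) (u r - 0)"
      using subdiff_mono[OF zsub zero_subdiff, of r] r assms by auto
  qed (use assms ucont_on in auto)
  then show ?thesis by simp
qed

lemma zeta_mono: assumes "0 < s" "s \<le> t" shows "norm (\<zeta> t) \<le> norm (\<zeta> s)"
proof -
  have c: "norm (u (t + h) - u t) \<le> norm (u (s + h) - u s)" if h: "h > 0" for h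
  proof -
    have "norm ((\<lambda>r. u (r + h)) t - u t) \<le> norm ((\<lambda>r. u (r + h)) s - u s)"
    proof (rule contraction[where \<xi> = "\<lambda>r. \<zeta> (r + h)" and \<eta> = \<zeta>])
      show "continuous_on {s..t} (\<lambda>r. u (r + h))"
        using assms h by (intro continuous_on_compose2[OF ucont]) (auto intro!: continuous_intros)
      fix r assume r: "s < r" "r < t"
      show "((\<lambda>r. u (r + h)) has_vector_derivative - \<zeta> (r + h)) (at_right r)"
        using r assms h by (intro vd_shift uder) auto
      show "(u has_vector_derivative - \<zeta> r) (at_right r)" using r assms by (intro uder) auto
      show "0 \<le> inner (\<zeta> (r + h) - \<zeta> r) (u (r + h) - u r)"
        using subdiff_mono[OF zsub zsub, of "r + h" r] r assms h by auto
    qed (use assms ucont_on in auto)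
    then show ?thesis by simp
  qed
  have lt: "((\<lambda>h. norm ((1 / h) *\<^sub>R (u (t + h) - u t))) \<longlongrightarrow> norm (- \<zeta> t)) (at_right 0)"
    using assms by (intro tendsto_norm vd_dq_h uder) auto
  have ls: "((\<lambda>h. norm ((1 / h) *\<^sub>R (u (s + h) - u s))) \<longlongrightarrow> norm (- \<zeta> s)) (at_right 0)"
    using assms by (intro tendsto_norm vd_dq_h uder) auto
  have ev: "eventually (\<lambda>h. norm ((1 / h) *\<^sub>R (u (t + h) - u t)) \<le> norm ((1 / h) *\<^sub>R (u (s + h) - u s))) (at_right 0)"
    using c by (auto simp: eventually_at_right_field intro!: exI[of _ 1] divide_right_mono)
  have "norm (- \<zeta> t) \<le> norm (- \<zeta> s)" by (rule tendsto_le[OF _ ls lt ev]) simp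
  then show ?thesis by simp
qed

lemma u_right_cont: "0 \<le> t \<Longrightarrow> (u \<longlongrightarrow> u t) (at_right t)"
  using ucont by (auto simp: continuous_on_def intro: tendsto_within_subset)

lemma u_cont_within: "0 \<le> a \<Longrightarrow> r \<in> {a..b} \<Longrightarrow> (u \<longlongrightarrow> u r) (at r within {a..b})"
  using ucont_on[of a b] by (auto simp: continuous_on_def)

lemma eps_sub:
  assumes "0 < t" "t < y" "J v \<noteq> \<infinity>"
  shows "Jr (u t) + inner (\<zeta> y) (v - u t) \<le> Jr v + 2 * norm (\<zeta> t) * norm (u y - u t)"
proof -
  have y0: "0 < y" using assms by simp
  have A: "Jr (u y) + inner (\<zeta> y) (v - u y) \<le> Jr v" by (rule subdiff_ineq[OF zsub[OF y0] assms(3)])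
  have B: "Jr (u t) + inner (\<zeta> t) (u y - u t) \<le> Jr (u y)" by (rule subdiff_ineq[OF zsub[OF assms(1)] Jfin[OF y0]])
  have eq: "inner (\<zeta> y) (v - u t) = inner (\<zeta> y) (v - u y) + inner (\<zeta> y - \<zeta> t) (u y - u t) + inner (\<zeta> t) (u y - u t)"
    by (simp add: inner_diff_left inner_diff_right)
  have "inner (\<zeta> y - \<zeta> t) (u y - u t) \<le> norm (\<zeta> y - \<zeta> t) * norm (u y - u t)"
    by (rule norm_cauchy_schwarz)
  also have "\<dots> \<le> (norm (\<zeta> y) + norm (\<zeta> t)) * norm (u y - u t)"
    by (intro mult_right_mono norm_triangle_ineq4) auto
  also have "\<dots> \<le> (norm (\<zeta> t) + norm (\<zeta> t)) * norm (u y - u t)"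
    using zeta_mono[of t y] assms by (intro mult_right_mono) auto
  finally have "inner (\<zeta> y - \<zeta> t) (u y - u t) \<le> 2 * norm (\<zeta> t) * norm (u y - u t)" by simp
  with A B eq show ?thesis by linarith
qed

lemma zeta_weak:
  assumes t: "0 < t"
  shows "((\<lambda>y. inner (\<zeta> y) (\<zeta> t)) \<longlongrightarrow> (norm (\<zeta> t))^2) (at_right t)"
proof (rule order_tendstoI)
  fix a assume a: "(norm (\<zeta> t))^2 < a"
  have "inner (\<zeta> y) (\<zeta> t) < a" if "t < y" for y
  proof -
    have "inner (\<zeta> y) (\<zeta> t) \<le> norm (\<zeta> y) * norm (\<zeta> t)" by (rule norm_cauchy_schwarz)
    also have "\<dots> \<le> norm (\<zeta> t) * norm (\<zeta> t)" using zeta_mono[of t y] t that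
      by (intro mult_right_mono) auto
    finally show ?thesis using a by (simp add: power2_eq_square)
  qed
  then show "eventually (\<lambda>y. inner (\<zeta> y) (\<zeta> t) < a) (at_right t)"
    by (auto simp: eventually_at_right_field intro!: exI[of _ "t + 1"])
next
  fix a assume a: "a < (norm (\<zeta> t))^2"
  show "eventually (\<lambda>y. a < inner (\<zeta> y) (\<zeta> t)) (at_right t)"
  proof (rule ccontr)
    assume ne: "\<not> eventually (\<lambda>y. a < inner (\<zeta> y) (\<zeta> t)) (at_right t)"
    then have fr: "frequently (\<lambda>y. inner (\<zeta> y) (\<zeta> t) \<le> a) (at_right t)"
      by (simp add: not_eventually not_less)
    define x where "x = u t"
    define z where "z = \<zeta> t"
    define r where "r = Jr x"
    define S where "S n = {w. norm w \<le> norm z \<and> inner w z \<le> a \<and>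
       (\<forall>v. J v \<noteq> \<infinity> \<longrightarrow> r + inner w (v - x) \<le> Jr v + 1 / (real n + 1))}" for n :: nat
    have lim0: "((\<lambda>y. 2 * norm z * norm (u y - x)) \<longlongrightarrow> 2 * norm z * norm (x - x)) (at_right t)"
      unfolding x_def using t by (intro tendsto_intros u_right_cont) auto
    have "S n \<noteq> {}" for n
    proof -
      have "eventually (\<lambda>y. 2 * norm z * norm (u y - x) < 1 / (real n + 1)) (at_right t)"
        using lim0 by (intro order_tendstoD) auto
      moreover have "eventually (\<lambda>y. t < y) (at_right t)" by (auto simp: eventually_at_right_field intro!: exI[of _ "t + 1"])
      ultimately have "eventually (\<lambda>y. t < y \<and> 2 * norm z * norm (u y - x) < 1 / (real n + 1)) (at_right t)"
        by (rule eventually_conj[rotated])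
      from frequently_ex[OF frequently_eventually_frequently[OF fr this]]
      obtain y where y: "inner (\<zeta> y) z \<le> a" "t < y" "2 * norm z * norm (u y - x) < 1 / (real n + 1)"
        by (auto simp: z_def)
      have "\<zeta> y \<in> S n" unfolding S_def
      proof (intro CollectI conjI allI impI)
        show "norm (\<zeta> y) \<le> norm z" using zeta_mono[of t y] t y by (simp add: z_def)
        show "inner (\<zeta> y) z \<le> a" by (rule y(1))
        fix v assume v: "J v \<noteq> \<infinity>"
        from eps_sub[OF t y(2) v] y(3)
        show "r + inner (\<zeta> y) (v - x) \<le> Jr v + 1 / (real n + 1)"
          by (simp add: r_def x_def z_def)
      qed
      then show ?thesis by blast
    qed
    moreover have "closed (S n)" for n
    proof -
      have "S n = {w. norm w \<le> norm z} \<inter> {w. inner w z \<le> a} \<inter>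
          {w. \<forall>v. J v \<noteq> \<infinity> \<longrightarrow> r + inner w (v - x) \<le> Jr v + 1 / (real n + 1)}"
        by (auto simp: S_def)
      moreover have "closed {w. \<forall>v. J v \<noteq> \<infinity> \<longrightarrow> r + inner w (v - x) \<le> Jr v + 1 / (real n + 1)}"
      proof (rule closed_Collect_all)
        fix v
        show "closed {w. J v \<noteq> \<infinity> \<longrightarrow> r + inner w (v - x) \<le> Jr v + 1 / (real n + 1)}"
        proof (cases "J v = \<infinity>")
          case False
          then show ?thesis by (simp, intro closed_Collect_le continuous_intros)
        qed simp
      qed
      ultimately show ?thesis
        by (auto intro!: closed_Int closed_Collect_le continuous_intros)
    qed
    moreover have "S (Suc n) \<subseteq> S n" for n
    proof -
      have "1 / (real (Suc n) + 1) \<le> 1 / (real n + 1)" by (intro divide_left_mono) auto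
      then show ?thesis unfolding S_def by (auto intro: order_trans)
    qed
    moreover have "(1/2) *\<^sub>R (w1 + w2) \<in> S n" if "w1 \<in> S n" "w2 \<in> S n" for n w1 w2
    proof -
      have "norm ((1/2) *\<^sub>R (w1 + w2)) \<le> (1/2) * (norm w1 + norm w2)"
        using norm_triangle_ineq[of w1 w2] by simp
      have w1: "norm w1 \<le> norm z" "inner w1 z \<le> a"
        "\<And>v. J v \<noteq> \<infinity> \<Longrightarrow> r + inner w1 (v - x) \<le> Jr v + 1 / (real n + 1)"
        using that(1) by (auto simp: S_def)
      have w2: "norm w2 \<le> norm z" "inner w2 z \<le> a"
        "\<And>v. J v \<noteq> \<infinity> \<Longrightarrow> r + inner w2 (v - x) \<le> Jr v + 1 / (real n + 1)"
        using that(2) by (auto simp: S_def)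
      have ii: "inner ((1/2) *\<^sub>R (w1 + w2)) c = (inner w1 c + inner w2 c) / 2" for c
        by (simp add: inner_add_left)
      show ?thesis unfolding S_def
      proof (intro CollectI conjI allI impI)
        have "norm ((1/2) *\<^sub>R (w1 + w2)) \<le> (1/2) * (norm w1 + norm w2)" by fact
        also have "\<dots> \<le> (1/2) * (norm z + norm z)" using w1(1) w2(1) by (intro mult_left_mono add_mono) auto
        finally show "norm ((1/2) *\<^sub>R (w1 + w2)) \<le> norm z" by simp
        show "inner ((1/2) *\<^sub>R (w1 + w2)) z \<le> a" unfolding ii using w1(2) w2(2) by (simp add: field_simps)
        fix v assume "J v \<noteq> \<infinity>"
        from w1(3)[OF this] w2(3)[OF this]
        show "r + inner ((1/2) *\<^sub>R (w1 + w2)) (v - x) \<le> Jr v + 1 / (real n + 1)"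
          unfolding ii by (simp add: field_simps)
      qed
    qed
    moreover have "norm w \<le> norm z" if "w \<in> S n" for n w using that by (simp add: S_def)
    ultimately obtain w where w: "\<And>n. w \<in> S n" using nested_mid[of S "norm z"] by metis
    have fin: "J x \<noteq> \<infinity>" unfolding x_def by (rule Jfin[OF t])
    have wsub: "w \<in> subdiff J x"
    proof (rule subdiff_intro[OF fin])
      fix v assume v: "J v \<noteq> \<infinity>"
      have H: "Jr x + inner w (v - x) \<le> Jr v + 1 / (real n + 1)" for n
        using w[of n] v by (auto simp: S_def r_def)
      show "Jr x + inner w (v - x) \<le> Jr v"
      proof (rule field_le_epsilon)
        fix e :: real assume e: "0 < e"
        obtain n :: nat where n: "1 / e < real n" using reals_Archimedean2 by blast
        have "1 < real n * e" using n e by (simp add: pos_divide_less_eq)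
        then have "1 < e * (real n + 1)" using e by (simp add: algebra_simps)
        then have "1 / (real n + 1) < e" by (simp add: pos_divide_less_eq)
        then have "Jr v + 1 / (real n + 1) \<le> Jr v + e" by simp
        with H[of n] show "Jr x + inner w (v - x) \<le> Jr v + e" by (rule order_trans)
      qed
    qed
    have zsubx: "z \<in> subdiff J x" unfolding z_def x_def by (rule zsub[OF t])
    have mid: "(1/2) *\<^sub>R (w + z) \<in> subdiff J (u t)" using subdiff_mid[OF wsub zsubx] by (simp add: x_def)
    have "norm z \<le> norm ((1/2) *\<^sub>R (w + z))"
      using zmin'[OF t mid] by (simp add: z_def)
    then have "(norm z)^2 \<le> (norm ((1/2) *\<^sub>R (w + z)))^2" by (simp add: power_mono)
    also have "(norm ((1/2) *\<^sub>R (w + z)))^2 = (1/4) * inner (w + z) (w + z)"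
      by (simp add: power2_norm_eq_inner[symmetric] power_divide)
    also have "inner (w + z) (w + z) = inner w w + 2 * inner w z + inner z z"
      by (simp add: inner_add inner_commute)
    finally have X0: "inner z z \<le> (1/4) * (inner w w + 2 * inner w z + inner z z)"
      by (simp add: power2_norm_eq_inner)
    have X: "4 * inner z z \<le> inner w w + 2 * inner w z + inner z z"
      using mult_left_mono[OF X0, of 4] by simp
    have "norm w \<le> norm z" "inner w z \<le> a" using w[of 0] by (auto simp: S_def)
    then have Y: "inner w w \<le> inner z z" by (simp add: norm_le)
    have Z: "a < inner z z" using a by (simp add: z_def power2_norm_eq_inner)
    have aux: "\<And>A B C D :: real. 4 * C \<le> A + 2 * B + C \<Longrightarrow> A \<le> C \<Longrightarrow> B \<le> D \<Longrightarrow> D < C \<Longrightarrow> False"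
      by linarith
    show False by (rule aux[OF X Y \<open>inner w z \<le> a\<close> Z])
  qed
qed

lemma E_bound:
  assumes "0 < a" "a \<le> s" "a \<le> r"
  shows "\<bar>Jr (u s) - Jr (u r)\<bar> \<le> norm (\<zeta> a) * norm (u s - u r)"
proof -
  have s0: "0 < s" and r0: "0 < r" using assms by auto
  have 1: "Jr (u r) + inner (\<zeta> r) (u s - u r) \<le> Jr (u s)" by (rule subdiff_ineq[OF zsub[OF r0] Jfin[OF s0]])
  have 2: "Jr (u s) + inner (\<zeta> s) (u r - u s) \<le> Jr (u r)" by (rule subdiff_ineq[OF zsub[OF s0] Jfin[OF r0]])
  have 3: "- inner (\<zeta> r) (u s - u r) \<le> norm (\<zeta> a) * norm (u s - u r)"
  proof -
    have "- inner (\<zeta> r) (u s - u r) = inner (- \<zeta> r) (u s - u r)" by simp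
    also have "\<dots> \<le> norm (- \<zeta> r) * norm (u s - u r)" by (rule norm_cauchy_schwarz)
    also have "\<dots> \<le> norm (\<zeta> a) * norm (u s - u r)" using zeta_mono[OF assms(1,3)] by (simp add: mult_right_mono)
    finally show ?thesis .
  qed
  have 4: "- inner (\<zeta> s) (u r - u s) \<le> norm (\<zeta> a) * norm (u s - u r)"
  proof -
    have "- inner (\<zeta> s) (u r - u s) = inner (- \<zeta> s) (u r - u s)" by simp
    also have "\<dots> \<le> norm (- \<zeta> s) * norm (u r - u s)" by (rule norm_cauchy_schwarz)
    also have "\<dots> \<le> norm (\<zeta> a) * norm (u s - u r)" using zeta_mono[OF assms(1,2)]
      by (simp add: mult_right_mono norm_minus_commute)
    finally show ?thesis .
  qed
  from 1 2 3 4 show ?thesis by linarith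
qed

lemma E_cont: assumes "0 < a" shows "continuous_on {a..b} (\<lambda>s. Jr (u s))"
  unfolding continuous_on_def
proof
  fix r assume r: "r \<in> {a..b}"
  have "((\<lambda>s. Jr (u s) - Jr (u r)) \<longlongrightarrow> 0) (at r within {a..b})"
  proof (rule Lim_null_comparison)
    show "eventually (\<lambda>s. norm (Jr (u s) - Jr (u r)) \<le> norm (\<zeta> a) * norm (u s - u r)) (at r within {a..b})"
      using r E_bound[OF assms] by (auto simp: eventually_at_filter)
    have "((\<lambda>s. norm (\<zeta> a) * norm (u s - u r)) \<longlongrightarrow> norm (\<zeta> a) * norm (u r - u r)) (at r within {a..b})"
      using assms r by (intro tendsto_intros u_cont_within) auto
    then show "((\<lambda>s. norm (\<zeta> a) * norm (u s - u r)) \<longlongrightarrow> 0) (at r within {a..b})" by simp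
  qed
  then show "((\<lambda>s. Jr (u s)) \<longlongrightarrow> Jr (u r)) (at r within {a..b})" by (simp add: LIM_zero_iff)
qed

lemma E_deriv:
  assumes t: "0 < t"
  shows "((\<lambda>s. Jr (u s)) has_real_derivative (- ((norm (\<zeta> t))^2))) (at_right t)"
proof -
  define D where "D y = (1 / (y - t)) *\<^sub>R (u y - u t)" for y
  have Dlim: "(D \<longlongrightarrow> - \<zeta> t) (at_right t)" unfolding D_def by (rule vd_dq[OF uder[OF t]])
  have Llim: "((\<lambda>y. inner (\<zeta> t) (D y)) \<longlongrightarrow> - ((norm (\<zeta> t))^2)) (at_right t)"
  proof -
    have "((\<lambda>y. inner (\<zeta> t) (D y)) \<longlongrightarrow> inner (\<zeta> t) (- \<zeta> t)) (at_right t)"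
      by (intro tendsto_intros Dlim)
    then show ?thesis by (simp add: power2_norm_eq_inner)
  qed
  have R0: "((\<lambda>y. inner (\<zeta> y) (D y + \<zeta> t)) \<longlongrightarrow> 0) (at_right t)"
  proof (rule Lim_null_comparison)
    show "eventually (\<lambda>y. norm (inner (\<zeta> y) (D y + \<zeta> t)) \<le> norm (\<zeta> t) * norm (D y + \<zeta> t)) (at_right t)"
    proof (rule eventually_at_right_less[THEN eventually_mono])
      fix y assume y: "t < y"
      have "norm (inner (\<zeta> y) (D y + \<zeta> t)) \<le> norm (\<zeta> y) * norm (D y + \<zeta> t)"
        using Cauchy_Schwarz_ineq2[of "\<zeta> y" "D y + \<zeta> t"] by simp
      also have "\<dots> \<le> norm (\<zeta> t) * norm (D y + \<zeta> t)"
        using zeta_mono[of t y] t y by (intro mult_right_mono) auto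
      finally show "norm (inner (\<zeta> y) (D y + \<zeta> t)) \<le> norm (\<zeta> t) * norm (D y + \<zeta> t)" .
    qed
    have "((\<lambda>y. norm (\<zeta> t) * norm (D y + \<zeta> t)) \<longlongrightarrow> norm (\<zeta> t) * norm (- \<zeta> t + \<zeta> t)) (at_right t)"
      by (intro tendsto_intros Dlim)
    then show "((\<lambda>y. norm (\<zeta> t) * norm (D y + \<zeta> t)) \<longlongrightarrow> 0) (at_right t)" by simp
  qed
  have Ulim: "((\<lambda>y. inner (\<zeta> y) (D y)) \<longlongrightarrow> - ((norm (\<zeta> t))^2)) (at_right t)"
  proof -
    have "((\<lambda>y. - inner (\<zeta> y) (\<zeta> t) + inner (\<zeta> y) (D y + \<zeta> t)) \<longlongrightarrow> - ((norm (\<zeta> t))^2) + 0) (at_right t)"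
      by (intro tendsto_add tendsto_minus zeta_weak[OF t] R0)
    then show ?thesis by (simp add: inner_add_right)
  qed
  have low: "eventually (\<lambda>y. inner (\<zeta> t) (D y) \<le> (Jr (u y) - Jr (u t)) / (y - t)) (at_right t)"
  proof (rule eventually_at_right_less[THEN eventually_mono])
    fix y assume y: "t < y"
    have "Jr (u t) + inner (\<zeta> t) (u y - u t) \<le> Jr (u y)"
      using y t by (intro subdiff_ineq[OF zsub[OF t] Jfin]) auto
    then have "inner (\<zeta> t) (u y - u t) \<le> Jr (u y) - Jr (u t)" by simp
    then have "inner (\<zeta> t) (u y - u t) / (y - t) \<le> (Jr (u y) - Jr (u t)) / (y - t)"
      using y by (intro divide_right_mono) auto
    then show "inner (\<zeta> t) (D y) \<le> (Jr (u y) - Jr (u t)) / (y - t)" by (simp add: D_def)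
  qed
  have up: "eventually (\<lambda>y. (Jr (u y) - Jr (u t)) / (y - t) \<le> inner (\<zeta> y) (D y)) (at_right t)"
  proof (rule eventually_at_right_less[THEN eventually_mono])
    fix y assume y: "t < y"
    then have y0: "0 < y" using t by simp
    have "Jr (u y) + inner (\<zeta> y) (u t - u y) \<le> Jr (u t)"
      by (intro subdiff_ineq[OF zsub[OF y0] Jfin[OF t]])
    moreover have "inner (\<zeta> y) (u t - u y) = - inner (\<zeta> y) (u y - u t)"
      by (simp add: inner_diff_right)
    ultimately have "Jr (u y) - Jr (u t) \<le> inner (\<zeta> y) (u y - u t)" by simp
    then have "(Jr (u y) - Jr (u t)) / (y - t) \<le> inner (\<zeta> y) (u y - u t) / (y - t)"
      using y by (intro divide_right_mono) auto
    then show "(Jr (u y) - Jr (u t)) / (y - t) \<le> inner (\<zeta> y) (D y)" by (simp add: D_def)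
  qed
  have "((\<lambda>y. (Jr (u y) - Jr (u t)) / (y - t)) \<longlongrightarrow> - ((norm (\<zeta> t))^2)) (at_right t)"
    by (rule tendsto_sandwich[OF low up Llim Ulim])
  then show ?thesis by (simp add: has_field_derivative_iff)
qed

end


lemma norm_powr_inner: "norm x powr p = (inner x x) powr (p / 2)"
proof -
  have "norm x = (inner x x) powr (1/2)"
    by (simp add: norm_eq_sqrt_inner powr_half_sqrt)
  then show ?thesis by (simp add: powr_powr)
qed

locale Fnz = Fctx +
  assumes unz: "\<And>t. 0 \<le> t \<Longrightarrow> u t \<noteq> 0"
begin

definition Nn where "Nn r = inner (u r) (u r)"
definition Rt where "Rt r = Rr (u r)"
definition qf where "qf s = (if p = 2 then - ln s / 2 else s powr ((2 - p) / 2) / (p - 2))"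
definition Phi where "Phi r = qf (Nn r)"

lemma Nn_pos: "0 \<le> r \<Longrightarrow> Nn r > 0"
  using unz by (simp add: Nn_def)

lemma Rt_alt: "Rt r = p * Jr (u r) / (Nn r) powr (p / 2)"
  by (simp add: Rt_def Rr_def Nn_def norm_powr_inner)

lemma N_deriv: assumes "0 < r" shows "(Nn has_real_derivative (- 2 * p * Jr (u r))) (at_right r)"
proof -
  have "(Nn has_real_derivative (inner (u r) (- \<zeta> r) + inner (- \<zeta> r) (u r))) (at_right r)"
    unfolding Nn_def by (rule vd_inner[OF uder[OF assms] uder[OF assms]])
  moreover have "inner (u r) (- \<zeta> r) + inner (- \<zeta> r) (u r) = - 2 * p * Jr (u r)"
    using euler[OF zsub[OF assms]] by (simp add: inner_commute)
  ultimately show ?thesis by simp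
qed

lemma Nn_cont: "0 \<le> a \<Longrightarrow> continuous_on {a..b} Nn"
  unfolding Nn_def by (intro continuous_intros ucont_on)

lemma Rt_deriv_sign:
  assumes r: "0 < r"
  shows "p * ((- ((norm (\<zeta> r))^2)) * (Nn r powr (p / 2)) - Jr (u r) * ((p / 2) * Nn r powr (p / 2 - 1) * (- 2 * p * Jr (u r))))
          / (Nn r powr (p / 2) * Nn r powr (p / 2)) \<le> 0"
proof -
  define N where "N = Nn r"
  define E where "E = Jr (u r)"
  define Q where "Q = N powr (p / 2 - 1)"
  have N0: "N > 0" using Nn_pos r by (simp add: N_def)
  have Q0: "Q \<ge> 0" by (simp add: Q_def)
  have PQ: "N powr (p / 2) = Q * N"
  proof -
    have "N powr (p / 2) = N powr (p / 2 - 1 + 1)" by simp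
    also have "\<dots> = N powr (p / 2 - 1) * N powr 1" by (rule powr_add)
    also have "\<dots> = Q * N" using N0 by (simp add: Q_def)
    finally show ?thesis .
  qed
  have cs: "(p * E)^2 \<le> (norm (\<zeta> r))^2 * N"
  proof -
    have "p * E = inner (\<zeta> r) (u r)" using euler[OF zsub[OF r]] by (simp add: E_def)
    then have "(p * E)^2 \<le> inner (\<zeta> r) (\<zeta> r) * inner (u r) (u r)" using Cauchy_Schwarz_ineq by simp
    then show ?thesis by (simp add: N_def Nn_def power2_norm_eq_inner)
  qed
  have num: "(- ((norm (\<zeta> r))^2)) * (N powr (p / 2)) - E * ((p / 2) * Q * (- 2 * p * E))
      = Q * ((p * E)^2 - (norm (\<zeta> r))^2 * N)"
    unfolding PQ by (simp add: algebra_simps power2_eq_square)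
  have "Q * ((p * E)^2 - (norm (\<zeta> r))^2 * N) \<le> 0"
    using cs Q0 by (simp add: mult_nonneg_nonpos)
  then have "p * ((- ((norm (\<zeta> r))^2)) * (N powr (p / 2)) - E * ((p / 2) * Q * (- 2 * p * E))) \<le> 0"
    unfolding num using p_pos by (simp add: mult_nonneg_nonpos)
  moreover have "N powr (p / 2) * N powr (p / 2) > 0" using N0 by simp
  ultimately have "p * ((- ((norm (\<zeta> r))^2)) * (N powr (p / 2)) - E * ((p / 2) * Q * (- 2 * p * E)))
      / (N powr (p / 2) * N powr (p / 2)) \<le> 0" by (rule divide_nonpos_pos)
  then show ?thesis by (simp only: N_def E_def Q_def mult.assoc)
qed

lemma Rt_deriv:
  assumes r: "0 < r"
  shows "(Rt has_real_derivative
     p * ((- ((norm (\<zeta> r))^2)) * (Nn r powr (p / 2)) - Jr (u r) * ((p / 2) * Nn r powr (p / 2 - 1) * (- 2 * p * Jr (u r))))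
          / (Nn r powr (p / 2) * Nn r powr (p / 2))) (at_right r)"
proof -
  have N0: "Nn r > 0" using Nn_pos r by simp
  have d1: "((\<lambda>s. Nn s powr (p / 2)) has_real_derivative (p / 2) * Nn r powr (p / 2 - 1) * (- 2 * p * Jr (u r))) (at_right r)"
    using DERIV_chain2[OF has_real_derivative_powr[OF N0, of "p / 2"] N_deriv[OF r]] by (simp only: mult.assoc)
  have d2: "((\<lambda>s. Jr (u s) / Nn s powr (p / 2)) has_real_derivative
      ((- ((norm (\<zeta> r))^2)) * (Nn r powr (p / 2)) - Jr (u r) * ((p / 2) * Nn r powr (p / 2 - 1) * (- 2 * p * Jr (u r))))
          / (Nn r powr (p / 2) * Nn r powr (p / 2))) (at_right r)"
    by (rule DERIV_divide[OF E_deriv[OF r] d1]) (use N0 in simp)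
  have "((\<lambda>s. p * (Jr (u s) / Nn s powr (p / 2))) has_real_derivative p *
      (((- ((norm (\<zeta> r))^2)) * (Nn r powr (p / 2)) - Jr (u r) * ((p / 2) * Nn r powr (p / 2 - 1) * (- 2 * p * Jr (u r))))
          / (Nn r powr (p / 2) * Nn r powr (p / 2)))) (at_right r)"
    by (rule DERIV_cmult[OF d2])
  then show ?thesis unfolding Rt_alt[abs_def] by (simp add: times_divide_eq_right)
qed

lemma Rt_cont: assumes "0 < a" shows "continuous_on {a..b} Rt"
proof -
  have pos: "\<forall>x\<in>{a..b}. 0 < Nn x" using Nn_pos assms by auto
  then have ne: "\<forall>x\<in>{a..b}. Nn x powr (p / 2) \<noteq> 0" by auto
  show ?thesis unfolding Rt_alt[abs_def]
    by (intro continuous_on_mult continuous_on_const continuous_on_divide E_cont[OF assms] 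
        continuous_on_powr' Nn_cont ne) (use assms pos in auto)
qed

lemma Rt_mono: assumes "0 < s" "s \<le> t" shows "Rt t \<le> Rt s"
  by (rule rd_antimono[OF assms(2) Rt_cont[OF assms(1)] Rt_deriv Rt_deriv_sign]) (use assms in auto)

lemma Phi_deriv:
  assumes r: "0 < r"
  shows "(Phi has_real_derivative Rt r) (at_right r)"
proof -
  have N0: "Nn r > 0" using Nn_pos r by simp
  show ?thesis
  proof (cases "p = 2")
    case True
    have e: "Phi = (\<lambda>s. - ln (Nn s) / 2)" unfolding Phi_def qf_def using True by (simp add: fun_eq_iff)
    have "((\<lambda>s. ln (Nn s)) has_real_derivative inverse (Nn r) * (- 2 * p * Jr (u r))) (at_right r)"
      by (rule DERIV_chain2[OF DERIV_ln[OF N0] N_deriv[OF r]])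
    then have "((\<lambda>s. - ln (Nn s) / 2) has_real_derivative - (inverse (Nn r) * (- 2 * p * Jr (u r))) / 2) (at_right r)"
      by (rule DERIV_cdivide[OF DERIV_minus])
    moreover have "- (inverse (Nn r) * (- 2 * p * Jr (u r))) / 2 = Rt r"
      unfolding Rt_alt using True N0 by (simp add: field_simps)
    ultimately show ?thesis unfolding e by simp
  next
    case False
    then have p3: "p > 2" using p2 by simp
    have e: "Phi = (\<lambda>s. Nn s powr ((2 - p) / 2) / (p - 2))" unfolding Phi_def qf_def using False by (simp add: fun_eq_iff)
    have "((\<lambda>s. Nn s powr ((2 - p) / 2)) has_real_derivative ((2 - p) / 2 * Nn r powr ((2 - p) / 2 - 1)) * (- 2 * p * Jr (u r))) (at_right r)"
      by (rule DERIV_chain2[OF has_real_derivative_powr[OF N0] N_deriv[OF r]])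
    then have "((\<lambda>s. Nn s powr ((2 - p) / 2) / (p - 2)) has_real_derivative ((2 - p) / 2 * Nn r powr ((2 - p) / 2 - 1)) * (- 2 * p * Jr (u r)) / (p - 2)) (at_right r)"
      by (rule DERIV_cdivide)
    moreover have "((2 - p) / 2 * Nn r powr ((2 - p) / 2 - 1)) * (- 2 * p * Jr (u r)) / (p - 2) = Rt r"
    proof -
      have ex: "(2 - p) / 2 - 1 = - (p / 2)" by (simp add: field_simps)
      have "Nn r powr (- (p / 2)) = 1 / Nn r powr (p / 2)" by (simp add: powr_minus_divide)
      then show ?thesis unfolding Rt_alt ex using p3 N0 by (simp add: field_simps)
    qed
    ultimately show ?thesis unfolding e by simp
  qed
qed

lemma Phi_cont: assumes "0 \<le> a" shows "continuous_on {a..b} Phi"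
proof -
  have pos: "\<forall>x\<in>{a..b}. 0 < Nn x" using Nn_pos assms by auto
  show ?thesis
  proof (cases "p = 2")
    case True
    have e: "Phi = (\<lambda>s. - ln (Nn s) / 2)" unfolding Phi_def qf_def using True by (simp add: fun_eq_iff)
    show ?thesis unfolding e
      by (intro continuous_on_divide continuous_on_minus continuous_on_ln Nn_cont assms continuous_on_const)
         (use pos in auto)
  next
    case False
    have e: "Phi = (\<lambda>s. Nn s powr ((2 - p) / 2) / (p - 2))" unfolding Phi_def qf_def using False by (simp add: fun_eq_iff)
    show ?thesis unfolding e
      by (intro continuous_on_divide continuous_on_powr' Nn_cont assms continuous_on_const)
         (use pos False in auto)
  qed
qed

lemma K1: assumes "0 < t" shows "Rt t * t \<le> Phi t - Phi 0"
proof -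
  have "(\<lambda>r. Phi r - Rt t * r) 0 \<le> (\<lambda>r. Phi r - Rt t * r) t"
  proof (rule rd_mono[where f = "\<lambda>r. Phi r - Rt t * r" and f' = "\<lambda>r. Rt r - Rt t"])
    show "continuous_on {0..t} (\<lambda>r. Phi r - Rt t * r)" by (intro continuous_intros Phi_cont) auto
    fix r assume r: "0 < r" "r < t"
    show "((\<lambda>r. Phi r - Rt t * r) has_real_derivative Rt r - Rt t) (at_right r)"
      using Phi_deriv[OF r(1)] by (auto intro!: derivative_eq_intros)
    show "0 \<le> Rt r - Rt t" using Rt_mono[of r t] r by simp
  qed (use assms in auto)
  then show ?thesis by simp
qed

lemma K2: assumes "0 < T" "T \<le> t" shows "Phi t - Phi T \<le> Rt T * (t - T)"
proof -
  have "(\<lambda>r. Rt T * r - Phi r) T \<le> (\<lambda>r. Rt T * r - Phi r) t"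
  proof (rule rd_mono[where f = "\<lambda>r. Rt T * r - Phi r" and f' = "\<lambda>r. Rt T - Rt r"])
    show "continuous_on {T..t} (\<lambda>r. Rt T * r - Phi r)" using assms by (intro continuous_intros Phi_cont) auto
    fix r assume r: "T < r" "r < t"
    show "((\<lambda>r. Rt T * r - Phi r) has_real_derivative Rt T - Rt r) (at_right r)"
      using Phi_deriv[of r] r assms by (auto intro!: derivative_eq_intros)
    show "0 \<le> Rt T - Rt r" using Rt_mono[of T r] r assms by simp
  qed (use assms in auto)
  then show ?thesis by (simp add: algebra_simps)
qed

lemma K3: assumes "0 \<le> t1" "t1 \<le> t2" "\<And>r. t1 < r \<Longrightarrow> r < t2 \<Longrightarrow> \<mu> \<le> Rt r"
  shows "\<mu> * (t2 - t1) \<le> Phi t2 - Phi t1"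
proof -
  have "(\<lambda>r. Phi r - \<mu> * r) t1 \<le> (\<lambda>r. Phi r - \<mu> * r) t2"
  proof (rule rd_mono[where f = "\<lambda>r. Phi r - \<mu> * r" and f' = "\<lambda>r. Rt r - \<mu>"])
    show "continuous_on {t1..t2} (\<lambda>r. Phi r - \<mu> * r)" using assms by (intro continuous_intros Phi_cont) auto
    fix r assume r: "t1 < r" "r < t2"
    show "((\<lambda>r. Phi r - \<mu> * r) has_real_derivative Rt r - \<mu>) (at_right r)"
      using Phi_deriv[of r] r assms by (auto intro!: derivative_eq_intros)
    show "0 \<le> Rt r - \<mu>" using assms(3)[OF r] by simp
  qed (use assms in auto)
  then show ?thesis by (simp add: algebra_simps)
qed

end


context Jctx begin

lemma Rr_scale: assumes "c \<noteq> 0" shows "Rr (c *\<^sub>R x) = Rr x"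
proof -
  have "norm (c *\<^sub>R x) powr p = \<bar>c\<bar> powr p * norm x powr p" by (simp add: powr_mult)
  then show ?thesis using assms by (simp add: Rr_def Jr_scale)
qed

lemma Jr_Rr: "Jr x = Rr x * norm x powr p / p"
  using p_pos by (cases "x = 0") (auto simp: Rr_def Jr0)

lemma lsc_le:
  fixes x :: "nat \<Rightarrow> 'a" and c :: "nat \<Rightarrow> real"
  assumes "x \<longlonglongrightarrow> y" "eventually (\<lambda>k. J (x k) \<le> ereal (c k)) sequentially" "c \<longlonglongrightarrow> c0"
  shows "J y \<le> ereal c0"
proof -
  have le: "J y \<le> ereal (c0 + e)" if e: "e > 0" for e
  proof -
    have "eventually (\<lambda>k. c k < c0 + e) sequentially" using assms(3) e by (intro order_tendstoD) auto
    with assms(2) have ev: "eventually (\<lambda>k. x k \<in> {v. J v \<le> ereal (c0 + e)}) sequentially"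
      by eventually_elim (auto intro: order_trans)
    have cl: "closed {v. J v \<le> ereal (c0 + e)}" using lsc by (simp add: lsc_fun_def)
    have "y \<in> {v. J v \<le> ereal (c0 + e)}"
      using Lim_in_closed_set[OF cl ev _ assms(1)] by simp
    then show ?thesis by simp
  qed
  have fin: "J y \<noteq> \<infinity>" using le[of 1] by auto
  have "Jr y \<le> c0"
  proof (rule field_le_epsilon)
    fix e :: real assume "0 < e" then show "Jr y \<le> c0 + e" using le[of e] J_fin[OF fin] by simp
  qed
  then show ?thesis using J_fin[OF fin] by simp
qed

lemma gs_from_lim:
  fixes x :: "nat \<Rightarrow> 'a"
  assumes l: "lambda1 p J = ereal l" and lim: "x \<longlonglongrightarrow> y" and y: "y \<in> H0 J"
    and fin: "eventually (\<lambda>k. J (x k) \<noteq> \<infinity>) sequentially"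
    and R: "(\<lambda>k. Rr (x k)) \<longlonglongrightarrow> l"
  shows "ground_state p J y"
proof -
  have y0: "y \<noteq> 0" using y by (simp add: H0_iff)
  have ev: "eventually (\<lambda>k. J (x k) \<le> ereal (Rr (x k) * norm (x k) powr p / p)) sequentially"
    using fin by eventually_elim (simp add: J_fin Jr_Rr[symmetric])
  have "(\<lambda>k. Rr (x k) * norm (x k) powr p / p) \<longlonglongrightarrow> l * norm y powr p / p"
    using y0 p_pos by (intro tendsto_intros R lim) auto
  from lsc_le[OF lim ev this] have le: "J y \<le> ereal (l * norm y powr p / p)" .
  then have finy: "J y \<noteq> \<infinity>" by auto
  have "Jr y \<le> l * norm y powr p / p" using le J_fin[OF finy] by simp
  then have "p * Jr y \<le> p * (l * norm y powr p / p)" using p_pos by (intro mult_left_mono) auto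
  then have "p * Jr y \<le> l * norm y powr p" using p_pos by simp
  moreover have np: "norm y powr p > 0" using y0 by simp
  ultimately have "Rr y \<le> l" unfolding Rr_def by (simp add: pos_divide_le_eq)
  moreover have "l \<le> Rr y" by (rule lam_Rr[OF l y finy])
  ultimately have "Rr y = l" by simp
  then show ?thesis using rayleigh_eq[OF finy y0] l y by (simp add: ground_state_def)
qed

end

locale Fmain = Fnz +
  fixes l :: real
  assumes lam: "lambda1 p J = ereal l" and lpos: "l > 0"
begin

definition lamf where "lamf = l * norm f powr (p - 2)"
definition aa where "aa t = profile_a p lamf t"
definition ww where "ww t = (1 / aa t) *\<^sub>R u t"

lemma f0: "f \<noteq> 0" using unz[of 0] u0 by simp

lemma lamf_pos: "lamf > 0" using lpos f0 by (simp add: lamf_def)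

lemma Rt_ge: "0 < r \<Longrightarrow> l \<le> Rt r"
  unfolding Rt_def using lam_Rr[OF lam _ Jfin[of r]] unz[of r] uperp'[of r] by (auto simp: H0_iff)

lemma Phi_lower: "0 \<le> t \<Longrightarrow> l * t \<le> Phi t - Phi 0"
  using K3[of 0 t l] Rt_ge by auto

lemma aa_pos: assumes "0 \<le> t" shows "aa t > 0"
proof -
  have "0 \<le> (p - 2) * lamf * t" using lamf_pos p2 assms by simp
  then have "1 + (p - 2) * lamf * t > 0" by simp
  then show ?thesis by (simp add: aa_def profile_a_def)
qed

lemma ww_norm: "0 \<le> t \<Longrightarrow> norm (ww t) = norm (u t) / aa t"
  using aa_pos[of t] by (simp add: ww_def)

lemma ww_nz: "0 \<le> t \<Longrightarrow> ww t \<noteq> 0"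
  using aa_pos[of t] unz[of t] by (simp add: ww_def)

lemma P1:
  assumes p3: "p > 2" and t: "0 \<le> t"
  shows "norm (ww t) powr (2 - p) = (p - 2) * Phi t / (1 + (p - 2) * lamf * t)"
proof -
  define \<tau> where "\<tau> = 1 + (p - 2) * lamf * t"
  have \<tau>0: "\<tau> > 0" using lamf_pos p3 t by (simp add: \<tau>_def add_pos_nonneg)
  have a: "aa t = \<tau> powr (- 1 / (p - 2))" using p3 by (simp add: aa_def profile_a_def \<tau>_def)
  have apow: "aa t powr (2 - p) = \<tau>"
  proof -
    have "aa t powr (2 - p) = \<tau> powr (- 1 / (p - 2) * (2 - p))" by (simp add: a powr_powr)
    also have "- 1 / (p - 2) * (2 - p) = 1" using p3 by (simp add: field_simps)
    finally show ?thesis using \<tau>0 by simp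
  qed
  have "norm (ww t) powr (2 - p) = norm (u t) powr (2 - p) / aa t powr (2 - p)"
    using aa_pos[OF t] by (simp add: ww_norm[OF t] powr_divide)
  also have "norm (u t) powr (2 - p) = (p - 2) * Phi t"
    using p3 by (simp add: norm_powr_inner Phi_def qf_def Nn_def)
  finally show ?thesis by (simp add: apow \<tau>_def)
qed

lemma P2:
  assumes p3: "p > 2"
  shows "(p - 2) * Phi 0 = norm f powr (2 - p)" "lamf * norm f powr (2 - p) = l"
proof -
  show "(p - 2) * Phi 0 = norm f powr (2 - p)"
    using p3 by (simp add: norm_powr_inner Phi_def qf_def Nn_def u0)
  have "norm f powr (p - 2) * norm f powr (2 - p) = norm f powr ((p - 2) + (2 - p))"
    by (rule powr_add[symmetric])
  also have "(p - 2) + (2 - p) = 0" by simp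
  also have "norm f powr 0 = 1" using f0 by simp
  finally show "lamf * norm f powr (2 - p) = l" by (simp add: lamf_def)
qed

lemma P3:
  assumes p3: "p > 2" and t: "0 \<le> t"
  shows "norm (ww t) powr (2 - p) = norm f powr (2 - p) + (p - 2) * (Phi t - Phi 0 - l * t) / (1 + (p - 2) * lamf * t)"
proof -
  have \<tau>0: "1 + (p - 2) * lamf * t > 0" using lamf_pos p3 t by (simp add: add_pos_nonneg)
  have "(p - 2) * Phi t = (p - 2) * (Phi t - Phi 0 - l * t) + norm f powr (2 - p) * (1 + (p - 2) * lamf * t)"
    using P2[OF p3] by (simp add: algebra_simps)
  then show ?thesis using \<tau>0 by (simp add: P1[OF p3 t] field_simps)
qed

lemma P4:
  assumes p3: "p = 2" and t: "0 \<le> t"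
  shows "ln (norm (ww t)) = l * t - Phi t"
proof -
  have lf: "lamf = l" unfolding lamf_def using p3 f0 by simp
  have a: "aa t = exp (- l * t)" unfolding aa_def profile_a_def using p3 lf by simp
  have "norm (ww t) = exp (l * t) * norm (u t)" using ww_norm[OF t] by (simp add: a exp_minus field_simps)
  then have "ln (norm (ww t)) = l * t + ln (norm (u t))" using unz[OF t] by (simp add: ln_mult)
  also have "ln (norm (u t)) = - Phi t"
  proof -
    have nn: "Nn t = (norm (u t))^2" by (simp add: Nn_def power2_norm_eq_inner)
    have "Phi t = - ln (Nn t) / 2" unfolding Phi_def qf_def using p3 by simp
    also have "ln (Nn t) = 2 * ln (norm (u t))" unfolding nn using unz[OF t] by (simp add: ln_realpow)
    finally show ?thesis by simp
  qed
  finally show ?thesis by simp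
qed

end


lemma powr_neg_anti:
  fixes x y a :: real
  assumes "a < 0" "0 < x" "0 < y" "y powr a \<le> x powr a"
  shows "x \<le> y"
proof (rule ccontr)
  assume "\<not> x \<le> y"
  then have "x powr a < y powr a" using powr_less_mono2_neg[OF assms(1) assms(3)] by simp
  with assms(4) show False by simp
qed

locale Fseq = Fmain +
  fixes tk :: "nat \<Rightarrow> real" and ws
  assumes tk: "filterlim tk at_top sequentially" and lim: "(\<lambda>k. ww (tk k)) \<longlonglongrightarrow> ws"
begin

lemma ev_tk: "eventually (\<lambda>k. c \<le> tk k) sequentially"
  using tk by (simp add: filterlim_at_top)

lemma ev_tk_pos: "eventually (\<lambda>k. 0 < tk k) sequentially"
proof -
  have "eventually (\<lambda>k. 1 \<le> tk k) sequentially" by (rule ev_tk)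
  then show ?thesis by eventually_elim simp
qed

lemma ws_perp: "\<forall>n\<in>null_set J. inner ws n = 0"
proof
  fix n assume n: "n \<in> null_set J"
  have cl: "closed {x. inner x n = 0}" by (intro closed_Collect_eq continuous_intros)
  have "eventually (\<lambda>k. ww (tk k) \<in> {x. inner x n = 0}) sequentially"
    using ev_tk_pos by eventually_elim (simp add: ww_def uperp[OF _ n])
  from Lim_in_closed_set[OF cl this _ lim] show "inner ws n = 0" by simp
qed

lemma Rr_ww: "0 \<le> t \<Longrightarrow> Rr (ww t) = Rt t"
  using aa_pos[of t] by (simp add: ww_def Rr_scale Rt_def)

lemma Rt_to_gs:
  assumes "ws \<noteq> 0" "(\<lambda>k. Rt (tk k)) \<longlonglongrightarrow> l"
  shows "ground_state p J ws"
proof (rule gs_from_lim[OF lam lim])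
  show "ws \<in> H0 J" using assms(1) ws_perp by (simp add: H0_iff)
  show "eventually (\<lambda>k. J (ww (tk k)) \<noteq> \<infinity>) sequentially"
    using ev_tk_pos by eventually_elim (simp add: ww_def J_scale_fin Jfin)
  have "eventually (\<lambda>k. Rt (tk k) = Rr (ww (tk k))) sequentially"
    using ev_tk_pos by eventually_elim (simp add: Rr_ww)
  from Lim_transform_eventually[OF assms(2) this]
  show "(\<lambda>k. Rr (ww (tk k))) \<longlonglongrightarrow> l" .
qed

lemma ww_le: assumes p3: "p > 2" and t: "0 \<le> t" shows "norm (ww t) \<le> norm f"
proof (rule powr_neg_anti[of "2 - p"])
  show "2 - p < 0" using p3 by simp
  show "0 < norm (ww t)" using ww_nz[OF t] by simp
  show "0 < norm f" using f0 by simp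
  have "0 \<le> (p - 2) * (Phi t - Phi 0 - l * t) / (1 + (p - 2) * lamf * t)"
    using Phi_lower[OF t] p3 lamf_pos t by (intro divide_nonneg_pos mult_nonneg_nonneg) (auto intro: add_pos_nonneg)
  then show "norm f powr (2 - p) \<le> norm (ww t) powr (2 - p)" using P3[OF p3 t] by simp
qed

lemma M1: assumes p3: "p > 2" shows "norm ws \<le> norm f"
proof -
  have "eventually (\<lambda>k. norm (ww (tk k)) \<le> norm f) sequentially"
    using ev_tk[of 0] by eventually_elim (rule ww_le[OF p3])
  from tendsto_le[OF _ tendsto_const tendsto_norm[OF lim] this] show ?thesis by simp
qed

lemma M4: assumes p3: "p = 2" and ws0: "ws \<noteq> 0" shows "ground_state p J ws"
proof (rule Rt_to_gs[OF ws0])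
  define B where "B k = - Phi 0 - ln (norm (ww (tk k)))" for k
  have Blim: "B \<longlonglongrightarrow> - Phi 0 - ln (norm ws)"
    unfolding B_def using ws0 by (intro tendsto_intros lim) auto
  have inv: "(\<lambda>k. 1 / tk k) \<longlonglongrightarrow> 0"
    using tk by (intro tendsto_divide_0[OF tendsto_const] filterlim_at_top_imp_at_infinity)
  have up: "eventually (\<lambda>k. Rt (tk k) - l \<le> B k * (1 / tk k)) sequentially"
    using ev_tk_pos
  proof eventually_elim
    case (elim k)
    define t where "t = tk k"
    have t: "0 < t" using elim by (simp add: t_def)
    have "Rt t * t \<le> Phi t - Phi 0" by (rule K1[OF t])
    moreover have "ln (norm (ww t)) = l * t - Phi t" by (rule P4[OF p3]) (use t in simp)
    ultimately have "(Rt t - l) * t \<le> B k" by (simp add: B_def t_def[symmetric] algebra_simps)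
    then show ?case using t by (simp add: t_def[symmetric] pos_le_divide_eq)
  qed
  have low: "eventually (\<lambda>k. 0 \<le> Rt (tk k) - l) sequentially"
    using ev_tk_pos by eventually_elim (simp add: Rt_ge)
  have lim2: "(\<lambda>k. B k * (1 / tk k)) \<longlonglongrightarrow> 0" using tendsto_mult[OF Blim inv] by simp
  have "(\<lambda>k. Rt (tk k) - l) \<longlonglongrightarrow> 0"
    by (rule tendsto_sandwich[OF low up tendsto_const lim2])
  then show "(\<lambda>k. Rt (tk k)) \<longlonglongrightarrow> l" by (simp add: LIM_zero_iff)
qed

lemma tau_lim: assumes "c > 0" shows "filterlim (\<lambda>k. 1 + c * tk k) at_top sequentially"
  by (rule filterlim_tendsto_add_at_top[OF tendsto_const filterlim_tendsto_pos_mult_at_top[OF tendsto_const assms tk]])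

lemma Glim: assumes "ws \<noteq> 0" shows "(\<lambda>k. norm (ww (tk k)) powr (2 - p)) \<longlonglongrightarrow> norm ws powr (2 - p)"
  using assms by (intro tendsto_intros lim) auto

lemma M2: assumes p3: "p > 2" and eq: "norm ws = norm f" shows "ground_state p J ws"
proof -
  have ws0: "ws \<noteq> 0" using eq f0 by auto
  define c where "c = (p - 2) * lamf"
  have c0: "c > 0" using p3 lamf_pos by (simp add: c_def)
  define Dk where "Dk k = (p - 2) * (Phi (tk k) - Phi 0 - l * tk k) / (1 + c * tk k)" for k
  have "eventually (\<lambda>k. norm (ww (tk k)) powr (2 - p) - norm f powr (2 - p) = Dk k) sequentially"
    using ev_tk[of 0] by eventually_elim (simp add: P3[OF p3] Dk_def c_def mult.assoc)
  moreover have "(\<lambda>k. norm (ww (tk k)) powr (2 - p) - norm f powr (2 - p)) \<longlonglongrightarrow> 0"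
    using Glim[OF ws0] eq by (simp add: LIM_zero_iff)
  ultimately have D0: "Dk \<longlonglongrightarrow> 0" by (rule Lim_transform_eventually[rotated])
  have up: "eventually (\<lambda>k. Rt (tk k) - l \<le> Dk k * ((1 + c) / (p - 2))) sequentially"
    using ev_tk[of 1]
  proof eventually_elim
    case (elim k)
    define t where "t = tk k"
    have t: "1 \<le> t" using elim by (simp add: t_def)
    define X where "X = Rt t - l"
    define Y where "Y = Phi t - Phi 0 - l * t"
    have X0: "0 \<le> X" using Rt_ge[of t] t by (simp add: X_def)
    have XY: "X * t \<le> Y" using K1[of t] t by (simp add: X_def Y_def algebra_simps)
    have tau0: "1 + c * t > 0" using c0 t by (simp add: add_pos_nonneg)
    have "X \<le> X * t" using X0 t by (simp add: mult_le_cancel_left1)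
    then have "X * (1 + c * t) \<le> X * t * (1 + c)" using c0 by (simp add: algebra_simps mult_left_mono)
    also have "\<dots> \<le> Y * (1 + c)" using XY c0 by (intro mult_right_mono) auto
    finally have "X \<le> Y * (1 + c) / (1 + c * t)" using tau0 by (simp add: pos_le_divide_eq)
    also have "Y * (1 + c) / (1 + c * t) = (p - 2) * Y / (1 + c * t) * ((1 + c) / (p - 2))"
    proof -
      have pn: "p - 2 \<noteq> 0" using p3 by simp
      have "(p - 2) * Y / (1 + c * t) * ((1 + c) / (p - 2)) = ((p - 2) * (Y * (1 + c))) / ((p - 2) * (1 + c * t))"
        by (simp add: ac_simps)
      also have "\<dots> = Y * (1 + c) / (1 + c * t)" using pn by (rule mult_divide_mult_cancel_left)
      finally show ?thesis by simp
    qed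
    finally show ?case by (simp add: Dk_def X_def Y_def t_def)
  qed
  have low: "eventually (\<lambda>k. 0 \<le> Rt (tk k) - l) sequentially"
    using ev_tk_pos by eventually_elim (simp add: Rt_ge)
  have lim2: "(\<lambda>k. Dk k * ((1 + c) / (p - 2))) \<longlonglongrightarrow> 0"
    using tendsto_mult[OF D0 tendsto_const[of "(1 + c) / (p - 2)"]] by (simp only: mult_zero_left)
  have "(\<lambda>k. Rt (tk k) - l) \<longlonglongrightarrow> 0" by (rule tendsto_sandwich[OF low up tendsto_const lim2])
  then show ?thesis by (intro Rt_to_gs ws0) (simp add: LIM_zero_iff)
qed

lemma gs_J: assumes "ground_state p J g" shows "g \<noteq> 0" "J g \<noteq> \<infinity>" "Rr g = l" "Jr g = l * norm g powr p / p"
proof -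
  from assms have g: "g \<in> H0 J" "rayleigh p J g = ereal l" by (auto simp: ground_state_def lam)
  show g0: "g \<noteq> 0" using g by (simp add: H0_iff)
  show fin: "J g \<noteq> \<infinity>"
  proof
    assume "J g = \<infinity>"
    then have "rayleigh p J g = \<infinity>" using g0 p_pos by (simp add: rayleigh_def)
    with g show False by simp
  qed
  show "Rr g = l" using rayleigh_eq[OF fin g0] g by simp
  then show "Jr g = l * norm g powr p / p" using Jr_Rr[of g] by simp
qed

lemma P0:
  assumes p3: "p > 2" and s: "0 \<le> s" and \<tau>0: "\<tau> > 0"
  shows "norm ((1 / \<tau> powr (- 1 / (p - 2))) *\<^sub>R u s) powr (2 - p) = (p - 2) * Phi s / \<tau>"
proof -
  define a where "a = \<tau> powr (- 1 / (p - 2))"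
  have a0: "a > 0" using \<tau>0 by (simp add: a_def)
  have apow: "a powr (2 - p) = \<tau>"
  proof -
    have "a powr (2 - p) = \<tau> powr (- 1 / (p - 2) * (2 - p))" by (simp add: a_def powr_powr)
    also have "- 1 / (p - 2) * (2 - p) = 1" using p3 by (simp add: field_simps)
    finally show ?thesis using \<tau>0 by simp
  qed
  have "norm ((1 / a) *\<^sub>R u s) powr (2 - p) = (norm (u s) / a) powr (2 - p)" using a0 by simp
  also have "\<dots> = norm (u s) powr (2 - p) / a powr (2 - p)"
    using a0 by (simp add: powr_divide)
  also have "norm (u s) powr (2 - p) = (p - 2) * Phi s"
    using p3 by (simp add: norm_powr_inner Phi_def qf_def Nn_def)
  finally have "norm ((1 / a) *\<^sub>R u s) powr (2 - p) = (p - 2) * Phi s / a powr (2 - p)" .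
  then show ?thesis unfolding apow by (simp only: a_def)
qed

lemma aa_eq: "p > 2 \<Longrightarrow> aa t = (1 + (p - 2) * lamf * t) powr (- 1 / (p - 2))"
  by (simp add: aa_def profile_a_def)

lemma M3b: assumes p3: "p > 2" and gs: "ground_state p J ws" and e: "e > 0" and R: "\<And>T. 0 < T \<Longrightarrow> l + e \<le> Rt T"
  shows False
proof -
  define g where "g = ws"
  have g0: "g \<noteq> 0" and gfin: "J g \<noteq> \<infinity>" and gJ: "Jr g = l * norm g powr p / p"
    using gs_J[OF gs] by (auto simp: g_def)
  define c where "c = p - 2"
  have c0: "c > 0" using p3 by (simp add: c_def)
  define ng where "ng = norm g"
  have ng0: "ng > 0" using g0 by (simp add: ng_def)
  define \<beta> where "\<beta> = c * l * ng powr c"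
  have \<beta>0: "\<beta> > 0" using c0 lpos ng0 by (simp add: \<beta>_def)
  define \<kappa> where "\<kappa> = (1 + \<beta>) powr (- 1 / c)"
  have \<kappa>0: "\<kappa> > 0" using \<beta>0 by (simp add: \<kappa>_def)
  define Y where "Y = \<kappa> *\<^sub>R g"
  define \<tau> where "\<tau> k = 1 + c * lamf * tk k" for k
  define Xk where "Xk k = (1 / aa (tk k)) *\<^sub>R u (tk k + \<tau> k)" for k
  have claim: "norm (Xk k - Y) \<le> norm (ww (tk k) - g) \<and>
      norm (ww (tk k)) powr (2 - p) + c * (l + e) \<le> norm (Xk k) powr (2 - p)" if tpos: "0 < tk k" for k
  proof -
    define t where "t = tk k"
    define T where "T = \<tau> k"
    have t0: "0 < t" using tpos by (simp add: t_def)
    have T0: "T > 0" using c0 lamf_pos tpos by (simp add: T_def \<tau>_def add_pos_nonneg)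
    define a where "a = aa t"
    have a_eq: "a = T powr (- 1 / c)" using p3 by (simp add: a_def aa_eq T_def \<tau>_def c_def t_def)
    have a0: "a > 0" using T0 by (simp add: a_eq)
    define X where "X s = T + \<beta> * (s - t)" for s
    define b where "b s = X s powr (- 1 / c)" for s
    define v where "v s = b s *\<^sub>R g" for s
    define \<eta> where "\<eta> s = (\<beta> / c * X s powr (- 1 / c - 1)) *\<^sub>R g" for s
    have X0: "X s > 0" if "t \<le> s" for s using that T0 \<beta>0 by (simp add: X_def add_pos_nonneg)
    have b0: "b s > 0" if "t \<le> s" for s using X0[OF that] by (simp add: b_def)
    have contr: "norm (u (t + T) - v (t + T)) \<le> norm (u t - v t)"
    proof (rule contraction[where \<xi> = \<zeta> and \<eta> = \<eta>])
      show "t \<le> t + T" using T0 by simp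
      show "continuous_on {t..t + T} u" using t0 by (intro ucont_on) simp
      have pos: "\<forall>s\<in>{t..t + T}. 0 \<le> X s \<and> (X s = 0 \<longrightarrow> 0 < - 1 / c)"
        using X0 by (auto simp: less_imp_le) (metis less_irrefl)
      have cX: "continuous_on {t..t + T} X" unfolding X_def by (intro continuous_intros)
      show "continuous_on {t..t + T} v" unfolding v_def b_def
        by (intro continuous_on_scaleR continuous_on_powr' cX continuous_on_const pos)
      fix s assume s: "t < s" "s < t + T"
      show "(u has_vector_derivative - \<zeta> s) (at_right s)" using s t0 by (intro uder) simp
      have dX: "(X has_real_derivative \<beta>) (at s)" unfolding X_def by (auto intro!: derivative_eq_intros)
      have db: "(b has_real_derivative (- 1 / c * X s powr (- 1 / c - 1) * \<beta>)) (at s)"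
      proof -
        have Xs: "X s > 0" using X0 s by simp
        show ?thesis unfolding b_def by (rule DERIV_chain2[OF has_real_derivative_powr[OF Xs] dX])
      qed
      have "(v has_vector_derivative (b s *\<^sub>R 0 + (- 1 / c * X s powr (- 1 / c - 1) * \<beta>) *\<^sub>R g)) (at s)"
        unfolding v_def by (rule has_vector_derivative_scaleR[OF db]) (rule has_vector_derivative_const)
      moreover have "b s *\<^sub>R 0 + (- 1 / c * X s powr (- 1 / c - 1) * \<beta>) *\<^sub>R g = - \<eta> s"
        by (simp add: \<eta>_def)
      ultimately show "(v has_vector_derivative - \<eta> s) (at_right s)"
        by (simp add: has_vector_derivative_at_within)
      have s0: "0 < s" using s t0 by simp
      define bs where "bs = b s"
      have bs0: "bs > 0" using b0[of s] s by (simp add: bs_def)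
      have vfin: "J (v s) \<noteq> \<infinity>" unfolding v_def by (rule J_scale_fin[OF gfin])
      have nv: "norm (v s) = bs * ng" using bs0 by (simp add: v_def bs_def ng_def)
      have Jv: "Jr (v s) = l * norm (v s) powr p / p"
      proof -
        have "Jr (v s) = bs powr p * Jr g" using bs0 by (simp add: v_def bs_def Jr_scale)
        also have "\<dots> = l * (bs powr p * ng powr p) / p" by (simp add: gJ ng_def)
        also have "bs powr p * ng powr p = norm (v s) powr p" using bs0 ng0 by (simp add: nv powr_mult)
        finally show ?thesis .
      qed
      have EL': "Jr (v s) + l * norm (v s) powr (p - 2) * inner (v s) (u s - v s) \<le> Jr (u s)"
        by (rule EL[OF lam _ uperp'[of s] Jfin[OF s0] Jv]) (use lpos s0 in auto)
      have sub: "Jr (u s) + inner (\<zeta> s) (v s - u s) \<le> Jr (v s)"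
        by (rule subdiff_ineq[OF zsub[OF s0] vfin])
      have etaeq: "\<eta> s = (l * norm (v s) powr (p - 2)) *\<^sub>R v s"
      proof -
        have "bs powr c * bs = bs powr (c + 1)" using bs0 by (simp add: powr_add)
        also have "\<dots> = X s powr (- 1 / c * (c + 1))" by (simp add: bs_def b_def powr_powr)
        also have "- 1 / c * (c + 1) = - 1 / c - 1" using c0 by (simp add: field_simps)
        finally have bb: "bs powr c * bs = X s powr (- 1 / c - 1)" .
        have "l * norm (v s) powr (p - 2) * bs = l * ng powr c * (bs powr c * bs)"
          using bs0 ng0 by (simp add: nv powr_mult c_def)
        also have "\<dots> = \<beta> / c * X s powr (- 1 / c - 1)" using c0 by (simp add: bb \<beta>_def)
        finally show ?thesis by (simp add: \<eta>_def v_def bs_def)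
      qed
      have "inner (\<eta> s) (u s - v s) = l * norm (v s) powr (p - 2) * inner (v s) (u s - v s)"
        by (simp add: etaeq)
      with EL' sub have "inner (\<zeta> s) (v s - u s) + inner (\<eta> s) (u s - v s) \<le> 0" by linarith
      moreover have "inner (\<zeta> s - \<eta> s) (u s - v s) = - (inner (\<zeta> s) (v s - u s) + inner (\<eta> s) (u s - v s))"
        by (simp add: inner_diff_left inner_diff_right)
      ultimately show "0 \<le> inner (\<zeta> s - \<eta> s) (u s - v s)" by linarith
    qed
    have vt: "v t = a *\<^sub>R g" by (simp add: v_def b_def X_def a_eq)
    have vT: "v (t + T) = (a * \<kappa>) *\<^sub>R g"
    proof -
      have "X (t + T) = T * (1 + \<beta>)" by (simp add: X_def algebra_simps)
      then have "b (t + T) = T powr (- 1 / c) * (1 + \<beta>) powr (- 1 / c)"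
        using T0 \<beta>0 by (simp add: b_def powr_mult)
      then show ?thesis by (simp add: v_def a_eq \<kappa>_def)
    qed
    have e2: "Xk k = (1 / a) *\<^sub>R u (t + T)" by (simp add: Xk_def a_def t_def T_def)
    have e3: "Xk k = (1 / T powr (- 1 / (p - 2))) *\<^sub>R u (t + T)" using e2 by (simp add: a_eq c_def)
    have C1: "norm (Xk k - Y) \<le> norm (ww t - g)"
    proof -
      have e1: "(1 / a) *\<^sub>R v (t + T) = Y" using vT a0 by (simp add: Y_def)
      have "Xk k - Y = (1 / a) *\<^sub>R (u (t + T) - v (t + T))"
        by (simp only: e1 e2 scaleR_diff_right)
      moreover have "ww t - g = (1 / a) *\<^sub>R (u t - v t)"
      proof -
        have "(1 / a) *\<^sub>R v t = g" using vt a0 by simp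
        moreover have "ww t = (1 / a) *\<^sub>R u t" by (simp add: ww_def a_def)
        ultimately show ?thesis by (simp only: scaleR_diff_right)
      qed
      ultimately show ?thesis using contr a0 by (simp add: divide_right_mono)
    qed
    have C2: "norm (ww t) powr (2 - p) + c * (l + e) \<le> norm (Xk k) powr (2 - p)"
    proof -
      have "(l + e) * ((t + T) - t) \<le> Phi (t + T) - Phi t"
        by (rule K3) (use t0 T0 R in auto)
      then have "(l + e) * T \<le> Phi (t + T) - Phi t" by simp
      then have "c * ((l + e) * T) \<le> c * (Phi (t + T) - Phi t)" using c0 by (intro mult_left_mono) auto
      then have "c * (l + e) \<le> (c * Phi (t + T) - c * Phi t) / T" using T0 by (simp add: pos_le_divide_eq algebra_simps)
      also have "\<dots> = c * Phi (t + T) / T - c * Phi t / T" by (rule diff_divide_distrib)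
      finally have "c * Phi t / T + c * (l + e) \<le> c * Phi (t + T) / T" by linarith
      moreover have "norm (ww t) powr (2 - p) = c * Phi t / T"
        using P1[OF p3, of t] t0 by (simp add: c_def T_def \<tau>_def t_def)
      moreover have "norm (Xk k) powr (2 - p) = c * Phi (t + T) / T"
      proof -
        have "norm ((1 / T powr (- 1 / (p - 2))) *\<^sub>R u (t + T)) powr (2 - p) = (p - 2) * Phi (t + T) / T"
          by (rule P0[OF p3 _ T0]) (use t0 T0 in simp)
        then show ?thesis unfolding e3 c_def .
      qed
      ultimately show ?thesis by simp
    qed
    show ?thesis using C1 C2 by (simp add: t_def)
  qed
  have Xlim: "Xk \<longlonglongrightarrow> Y"
  proof -
    have "(\<lambda>k. Xk k - Y) \<longlonglongrightarrow> 0"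
    proof (rule Lim_null_comparison)
      show "eventually (\<lambda>k. norm (Xk k - Y) \<le> norm (ww (tk k) - g)) sequentially"
        using ev_tk_pos by eventually_elim (use claim in blast)
      have "(\<lambda>k. norm (ww (tk k) - g)) \<longlonglongrightarrow> norm (ws - g)" by (intro tendsto_intros lim)
      then show "(\<lambda>k. norm (ww (tk k) - g)) \<longlonglongrightarrow> 0" by (simp add: g_def)
    qed
    then show ?thesis by (simp add: LIM_zero_iff)
  qed
  have Y0: "Y \<noteq> 0" using \<kappa>0 g0 by (simp add: Y_def)
  have L1: "(\<lambda>k. norm (Xk k) powr (2 - p)) \<longlonglongrightarrow> norm Y powr (2 - p)"
    using Y0 by (intro tendsto_intros Xlim) auto
  have L2: "(\<lambda>k. norm (ww (tk k)) powr (2 - p) + c * (l + e)) \<longlonglongrightarrow> norm g powr (2 - p) + c * (l + e)"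
  proof -
    have "ws \<noteq> 0" using g0 by (simp add: g_def)
    then show ?thesis unfolding g_def by (rule tendsto_add[OF Glim tendsto_const])
  qed
  have ev: "eventually (\<lambda>k. norm (ww (tk k)) powr (2 - p) + c * (l + e) \<le> norm (Xk k) powr (2 - p)) sequentially"
    using ev_tk_pos by eventually_elim (use claim in blast)
  have ineq: "norm g powr (2 - p) + c * (l + e) \<le> norm Y powr (2 - p)"
    by (rule tendsto_le[OF _ L1 L2 ev]) simp
  have "norm Y powr (2 - p) = \<kappa> powr (2 - p) * ng powr (2 - p)"
    using \<kappa>0 by (simp add: Y_def ng_def powr_mult)
  also have "\<kappa> powr (2 - p) = 1 + \<beta>"
  proof -
    have "\<kappa> powr (2 - p) = (1 + \<beta>) powr (- 1 / c * (2 - p))" by (simp add: \<kappa>_def powr_powr)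
    also have "- 1 / c * (2 - p) = 1" using c0 by (simp add: c_def field_simps)
    finally show ?thesis using \<beta>0 by simp
  qed
  also have "(1 + \<beta>) * ng powr (2 - p) = ng powr (2 - p) + c * l * (ng powr c * ng powr (2 - p))"
    by (simp add: \<beta>_def algebra_simps)
  also have "ng powr c * ng powr (2 - p) = 1"
  proof -
    have "ng powr c * ng powr (2 - p) = ng powr (c + (2 - p))" by (rule powr_add[symmetric])
    also have "c + (2 - p) = 0" by (simp add: c_def)
    finally show ?thesis using ng0 by simp
  qed
  finally have "norm Y powr (2 - p) = ng powr (2 - p) + c * l" by simp
  with ineq have "c * e \<le> 0" by (simp add: ng_def algebra_simps)
  with c0 e show False by (simp add: mult_le_0_iff)
qed

lemma M3: assumes p3: "p > 2" and gs: "ground_state p J ws" shows "norm ws = norm f"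
proof -
  have ws0: "ws \<noteq> 0" using gs_J[OF gs] by simp
  have "norm ws powr (2 - p) \<le> norm f powr (2 - p)"
  proof (cases "\<forall>e>0. \<exists>T>0. Rt T < l + e")
    case False
    then obtain e where e: "e > 0" "\<forall>T>0. \<not> Rt T < l + e" by blast
    have False by (rule M3b[OF p3 gs e(1)]) (use e(2) in \<open>auto simp: not_less\<close>)
    then show ?thesis ..
  next
    case True
    define c where "c = (p - 2) * lamf"
    have c0: "c > 0" using p3 lamf_pos by (simp add: c_def)
    show ?thesis
    proof (rule field_le_epsilon)
      fix e :: real assume e: "0 < e"
      from True e lamf_pos obtain T where T: "0 < T" "Rt T < l + e * lamf" by (meson mult_pos_pos)
      define C where "C = Phi T - Phi 0"
      have bound: "eventually (\<lambda>k. norm (ww (tk k)) powr (2 - p) \<le> norm f powr (2 - p) + ((p - 2) * C) / (1 + c * tk k) + e) sequentially"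
        using ev_tk[of T]
      proof eventually_elim
        case (elim k)
        define t where "t = tk k"
        have t: "T \<le> t" using elim by (simp add: t_def)
        have t0: "0 \<le> t" using t T by simp
        have tau0: "1 + c * t > 0" using c0 t0 by (simp add: add_pos_nonneg)
        have "Phi t - Phi T \<le> Rt T * (t - T)" by (rule K2[OF T(1) t])
        also have "\<dots> \<le> (l + e * lamf) * (t - T)" using T t by (intro mult_right_mono) auto
        finally have Y0: "Phi t - Phi T \<le> (l + e * lamf) * (t - T)" .
        have Y1: "(l + e * lamf) * (t - T) = l * t + e * lamf * t - (l + e * lamf) * T" by (simp add: algebra_simps)
        have Y3: "0 \<le> (l + e * lamf) * T" using T(1) e lamf_pos lpos by simp
        have Y: "Phi t - Phi 0 - l * t \<le> C + e * lamf * t" using Y0 Y1 Y3 unfolding C_def by linarith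
        have Y2: "(p - 2) * (Phi t - Phi 0 - l * t) / (1 + c * t) \<le> (p - 2) * (C + e * lamf * t) / (1 + c * t)"
          using Y p3 tau0 by (intro divide_right_mono mult_left_mono) auto
        have "(p - 2) * (C + e * lamf * t) / (1 + c * t) = ((p - 2) * C + e * (c * t)) / (1 + c * t)"
          by (simp add: c_def algebra_simps)
        also have "\<dots> = (p - 2) * C / (1 + c * t) + e * (c * t) / (1 + c * t)"
          by (rule add_divide_distrib)
        finally have eqn: "(p - 2) * (C + e * lamf * t) / (1 + c * t) = (p - 2) * C / (1 + c * t) + e * (c * t) / (1 + c * t)" .
        have q1: "c * t / (1 + c * t) \<le> 1" using tau0 by simp
        have q2: "e * (c * t) / (1 + c * t) \<le> e" using mult_left_le[OF q1, of e] e by simp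
        have "(p - 2) * (Phi t - Phi 0 - l * t) / (1 + c * t) \<le> (p - 2) * C / (1 + c * t) + e"
          using Y2 eqn q2 by linarith
        then show ?case using P3[OF p3 t0] by (simp add: t_def[symmetric] c_def mult.assoc)
      qed
      have rl: "(\<lambda>k. norm f powr (2 - p) + ((p - 2) * C) / (1 + c * tk k) + e) \<longlonglongrightarrow> norm f powr (2 - p) + 0 + e"
        by (intro tendsto_add tendsto_const tendsto_divide_0[OF tendsto_const] 
            filterlim_at_top_imp_at_infinity tau_lim c0)
      from tendsto_le[OF _ rl Glim[OF ws0] bound] show "norm ws powr (2 - p) \<le> norm f powr (2 - p) + e" by simp
    qed
  qed
  then have X: "norm ws powr (2 - p) \<le> norm f powr (2 - p)" .
  have "norm f \<le> norm ws" by (rule powr_neg_anti[OF _ _ _ X]) (use p3 f0 ws0 in auto)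
  with M1[OF p3] show ?thesis by simp
qed

end

theorem proposition7:
  fixes J :: "'a::{real_inner, complete_space} \<Rightarrow> ereal"
    and p :: real and f w_star :: 'a and u :: "real \<Rightarrow> 'a"
  assumes p: "p \<ge> 2"
    and proper: "proper_fun J" and conv: "convex_fun J" and lsc: "lsc_fun J"
    and dense: "closure (eff_dom J) = UNIV"
    and hom: "abs_homogeneous p J"
    and coercive: "lambda1 p J > 0"
    and f: "f \<in> H0 J"
    and flow: "gradient_flow J f u"
    and profile: "\<exists>tk :: nat \<Rightarrow> real. filterlim tk at_top sequentially \<and>
        ((\<lambda>k. (1 / profile_a p (real_of_ereal (lambda1 p J) * norm f powr (p - 2)) (tk k)) *\<^sub>R u (tk k))
          \<longlonglongrightarrow> w_star)"
  shows "(p = 2 \<longrightarrow> (ground_state p J w_star \<or> w_star = 0)) \<and>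
         (p > 2 \<longrightarrow> norm w_star \<le> norm f \<and> (norm w_star = norm f \<longleftrightarrow> ground_state p J w_star))"
proof -
  interpret Jctx J p using p proper conv lsc hom by unfold_locales
  from flow have ucont: "continuous_on {0..} u" and u0: "u 0 = f"
    and der: "\<forall>t>0. \<exists>z. min_norm_subgrad J (u t) z \<and> (u has_vector_derivative - z) (at_right t)"
    by (auto simp: gradient_flow_def)
  define \<zeta> where "\<zeta> t = (SOME z. min_norm_subgrad J (u t) z \<and> (u has_vector_derivative - z) (at_right t))" for t
  have \<zeta>: "min_norm_subgrad J (u t) (\<zeta> t) \<and> (u has_vector_derivative - \<zeta> t) (at_right t)" if "0 < t" for t
  proof -
    have ex: "\<exists>z. min_norm_subgrad J (u t) z \<and> (u has_vector_derivative - z) (at_right t)"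
      using der that by blast
    show ?thesis unfolding \<zeta>_def by (rule someI_ex[OF ex])
  qed
  have fperp: "\<And>n. n \<in> null_set J \<Longrightarrow> inner f n = 0" using f by (auto simp: H0_def)
  have f0: "f \<noteq> 0" using f by (auto simp: H0_def)
  interpret F: Fctx J p u \<zeta> f
    by unfold_locales (use ucont u0 fperp \<zeta> in auto)
  obtain tk where tk: "filterlim tk at_top sequentially"
    and lim: "(\<lambda>k. (1 / profile_a p (real_of_ereal (lambda1 p J) * norm f powr (p - 2)) (tk k)) *\<^sub>R u (tk k)) \<longlonglongrightarrow> w_star"
    using profile by blast
  show ?thesis
  proof (cases "\<exists>T\<ge>0. u T = 0")
    case True
    then obtain T where T: "T \<ge> 0" "u T = 0" by blast
    have uz: "u t = 0" if "T \<le> t" for t using F.unorm_mono[OF T(1) that] T(2) by simp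
    have "eventually (\<lambda>k. T \<le> tk k) sequentially" using tk by (simp add: filterlim_at_top)
    then have "eventually (\<lambda>k. (1 / profile_a p (real_of_ereal (lambda1 p J) * norm f powr (p - 2)) (tk k)) *\<^sub>R u (tk k) = 0) sequentially"
      by eventually_elim (simp add: uz)
    then have "(\<lambda>k. (1 / profile_a p (real_of_ereal (lambda1 p J) * norm f powr (p - 2)) (tk k)) *\<^sub>R u (tk k)) \<longlonglongrightarrow> 0"
      by (rule tendsto_eventually)
    with lim have ws0: "w_star = 0" using LIMSEQ_unique by blast
    show ?thesis using ws0 f0 by (auto simp: ground_state_def H0_def)
  next
    case False
    then have unz: "\<And>t. 0 \<le> t \<Longrightarrow> u t \<noteq> 0" by auto
    interpret N: Fnz J p u \<zeta> f by unfold_locales (rule unz)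
    have u1: "u 1 \<in> H0 J" using F.uperp'[of 1] unz[of 1] by (simp add: H0_iff)
    have "lambda1 p J \<le> rayleigh p J (u 1)" by (rule lam_le[OF u1])
    also have "\<dots> = ereal (Rr (u 1))" by (rule rayleigh_eq[OF F.Jfin]) (use unz in auto)
    finally have le1: "lambda1 p J \<le> ereal (Rr (u 1))" .
    then obtain l where l: "lambda1 p J = ereal l" using coercive by (cases "lambda1 p J") auto
    have lpos: "l > 0" using coercive l by simp
    interpret M: Fmain J p u \<zeta> f l by unfold_locales (use l lpos in auto)
    have eqlam: "real_of_ereal (lambda1 p J) * norm f powr (p - 2) = M.lamf" by (simp add: l M.lamf_def)
    have lim': "(\<lambda>k. M.ww (tk k)) \<longlonglongrightarrow> w_star" using lim unfolding eqlam M.ww_def M.aa_def .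
    interpret S: Fseq J p u \<zeta> f l tk w_star by unfold_locales (rule tk, rule lim')
    show ?thesis
    proof (intro conjI impI)
      assume "p = 2" then show "ground_state p J w_star \<or> w_star = 0" using S.M4 by blast
    next
      assume p3: "p > 2"
      show "norm w_star \<le> norm f" by (rule S.M1[OF p3])
      show "norm w_star = norm f \<longleftrightarrow> ground_state p J w_star" using S.M2[OF p3] S.M3[OF p3] by blast
    qed
  qed
qed

end
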